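(* Let $X$ be a cell complex such that the closure of each cell has the rational homology of a point, let $C=C_\bullet X$ be its rational cellular chains and $TC$ the tensor algebra on (the shift of) $C$. Let $\delta_1$ be the boundary operator and $\delta_2:C\to C\otimes C$ a local chain-level comultiplication (a chain map) which is cocommutative and coassociative on $0$-cells. Then there exist local maps $\delta_k:C\to C^{\otimes k}$, $k\ge3$, vanishing on $0$-cells, such that the derivation $\delta=\delta_1+\delta_2+\delta_3+\cdots$ of $TC$ (each $\delta_k$ extended as a derivation) satisfies $[\delta,\delta]=0$, i.e. $(BC,\delta)$ is a local A$_\infty$ coalgebra structure on $C$.
   Context: A map $\epsilon\in\mathrm{Hom}(C,TC)$ is local if for every cell $e_\alpha$ it sends $C_\bullet(\overline e_\alpha)$ into $TC_\bullet(\overline e_\alpha)$, the tensor algebra on the chains of the closure of $e_\alpha$. $[\cdot,\cdot]$ is the graded commutator of derivations. *)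

theory Defs
  imports Complex_Main
begin

text \<open>
Cells are the elements of the type 'c.  cdim e is the dimension of the cell e,
bd e f is the incidence number [e : f] (coefficient of f in the cellular boundary
of e), and cl e is the set of cells of the closure of e (a finite subcomplex).
Rational chains are finitely supported functions 'c => rat.  A word w :: 'c list
of length k is the basis element (s^-1 w1) ... (s^-1 wk) of the tensor algebra TC
on the desuspension of C; elements of TC are finitely supported functions
'c list => rat.  The shifted degree of a cell e is cdim e - 1.
\<close>

definition fsupp :: "('a \<Rightarrow> rat) \<Rightarrow> bool" where
  "fsupp f \<longleftrightarrow> finite {x. f x \<noteq> 0}"

definition supported_in :: "('c \<Rightarrow> rat) \<Rightarrow> 'c set \<Rightarrow> bool" where
  "supported_in z S \<longleftrightarrow> (\<forall>c. z c \<noteq> 0 \<longrightarrow> c \<in> S)"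

definition homogeneous :: "('c \<Rightarrow> nat) \<Rightarrow> nat \<Rightarrow> ('c \<Rightarrow> rat) \<Rightarrow> bool" where
  "homogeneous cdim n z \<longleftrightarrow> (\<forall>c. z c \<noteq> 0 \<longrightarrow> cdim c = n)"

definition chain_bd :: "('c \<Rightarrow> 'c \<Rightarrow> rat) \<Rightarrow> ('c \<Rightarrow> rat) \<Rightarrow> ('c \<Rightarrow> rat)" where
  "chain_bd bd z = (\<lambda>f. \<Sum>e\<in>{e. z e \<noteq> 0}. z e * bd e f)"

definition chains_in :: "('c \<Rightarrow> nat) \<Rightarrow> 'c set \<Rightarrow> nat \<Rightarrow> ('c \<Rightarrow> rat) set" where
  "chains_in cdim S n = {z. fsupp z \<and> supported_in z S \<and> homogeneous cdim n z}"

definition cell_complex ::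
  "('c \<Rightarrow> nat) \<Rightarrow> ('c \<Rightarrow> 'c \<Rightarrow> rat) \<Rightarrow> ('c \<Rightarrow> 'c set) \<Rightarrow> bool" where
  "cell_complex cdim bd cl \<longleftrightarrow>
     (\<forall>e. e \<in> cl e \<and> finite (cl e)) \<and>
     (\<forall>e f. f \<in> cl e \<longrightarrow> cl f \<subseteq> cl e) \<and>
     (\<forall>e f. f \<in> cl e \<and> f \<noteq> e \<longrightarrow> cdim f < cdim e) \<and>
     (\<forall>e f. bd e f \<noteq> 0 \<longrightarrow> f \<in> cl e \<and> cdim f + 1 = cdim e) \<and>
     (\<forall>e g. (\<Sum>f\<in>cl e. bd e f * bd f g) = 0) \<and>
     (\<forall>e. cdim e = 1 \<longrightarrow> (\<Sum>f\<in>cl e. bd e f) = 0)"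

definition rat_homology_of_point ::
  "('c \<Rightarrow> nat) \<Rightarrow> ('c \<Rightarrow> 'c \<Rightarrow> rat) \<Rightarrow> 'c set \<Rightarrow> bool" where
  "rat_homology_of_point cdim bd S \<longleftrightarrow>
     (\<forall>n>0. \<forall>z\<in>chains_in cdim S n. chain_bd bd z = (\<lambda>_. 0) \<longrightarrow>
        (\<exists>y\<in>chains_in cdim S (n+1). chain_bd bd y = z)) \<and>
     (\<exists>z0\<in>chains_in cdim S 0.
        (\<nexists>y. y \<in> chains_in cdim S 1 \<and> chain_bd bd y = z0) \<and>
        (\<forall>z\<in>chains_in cdim S 0. \<exists>q. \<exists>y\<in>chains_in cdim S 1.
            z = (\<lambda>c. q * z0 c + chain_bd bd y c)))"

definition local_map :: "('c \<Rightarrow> 'c set) \<Rightarrow> ('c \<Rightarrow> 'c list \<Rightarrow> rat) \<Rightarrow> bool" where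
  "local_map cl \<epsilon> \<longleftrightarrow> (\<forall>e w. \<epsilon> e w \<noteq> 0 \<longrightarrow> set w \<subseteq> cl e)"

text \<open>Koszul sign (-1)^(shifted degree of the word p).\<close>
definition psign :: "('c \<Rightarrow> nat) \<Rightarrow> 'c list \<Rightarrow> rat" where
  "psign cdim p = (if even (sum_list (map cdim p) + length p) then 1 else -1)"

text \<open>The (odd) derivation of TC extending \<epsilon> : C -> TC:
  D(x1...xn) = sum_i (-1)^(|x1|+...+|x_(i-1)|) x1...x_(i-1) \<epsilon>(x_i) x_(i+1)...xn,
  written coefficientwise.\<close>
definition deriv :: "('c \<Rightarrow> nat) \<Rightarrow> ('c \<Rightarrow> 'c list \<Rightarrow> rat) \<Rightarrow> ('c list \<Rightarrow> rat) \<Rightarrow> ('c list \<Rightarrow> rat)" where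
  "deriv cdim \<epsilon> t u =
     (\<Sum>i\<in>{0..length u}. \<Sum>j\<in>{i..length u}.
        \<Sum>c\<in>{c. t (take i u @ c # drop j u) \<noteq> 0}.
          psign cdim (take i u) * t (take i u @ c # drop j u) * \<epsilon> c (take (j - i) (drop i u)))"

definition odd_commutator ::
  "(('c list \<Rightarrow> rat) \<Rightarrow> ('c list \<Rightarrow> rat)) \<Rightarrow> (('c list \<Rightarrow> rat) \<Rightarrow> ('c list \<Rightarrow> rat)) \<Rightarrow>
   ('c list \<Rightarrow> rat) \<Rightarrow> ('c list \<Rightarrow> rat)" where
  "odd_commutator D E t = (\<lambda>u. D (E t) u + E (D t) u)"

text \<open>delta = delta_1 + delta_2 + delta_3 + ..., with delta_1 the boundary and delta_2 the
  desuspension of the comultiplication Delta (Delta e a b = coefficient of a (x) b in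
  Delta(e)), using s^-1 (x) s^-1 (a (x) b) = (-1)^|a| s^-1 a s^-1 b.\<close>
definition total_delta ::
  "('c \<Rightarrow> nat) \<Rightarrow> ('c \<Rightarrow> 'c \<Rightarrow> rat) \<Rightarrow> ('c \<Rightarrow> 'c \<Rightarrow> 'c \<Rightarrow> rat) \<Rightarrow>
   (nat \<Rightarrow> 'c \<Rightarrow> 'c list \<Rightarrow> rat) \<Rightarrow> 'c \<Rightarrow> 'c list \<Rightarrow> rat" where
  "total_delta cdim bd \<Delta> \<delta> e w =
     (if length w = 1 then bd e (w ! 0)
      else if length w = 2 then (-1) ^ cdim (w ! 0) * \<Delta> e (w ! 0) (w ! 1)
      else if length w \<ge> 3 then \<delta> (length w) e w
      else 0)"

end

theory Submission
  imports Defs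
begin

definition supp :: "('a \<Rightarrow> rat) \<Rightarrow> 'a set" where "supp t = {v. t v \<noteq> 0}"
definition sing :: "'a \<Rightarrow> 'a \<Rightarrow> rat" where "sing v = (\<lambda>u. if u = v then 1 else 0)"
definition ext :: "('a \<Rightarrow> 'b \<Rightarrow> rat) \<Rightarrow> ('a \<Rightarrow> rat) \<Rightarrow> 'b \<Rightarrow> rat" where
  "ext F t = (\<lambda>u. \<Sum>v\<in>supp t. t v * F v u)"

definition lmul :: "'c list \<Rightarrow> ('c list \<Rightarrow> rat) \<Rightarrow> 'c list \<Rightarrow> rat" where
  "lmul p b = (\<lambda>u. if length p \<le> length u \<and> take (length p) u = p then b (drop (length p) u) else 0)"
definition rmul :: "('c list \<Rightarrow> rat) \<Rightarrow> 'c list \<Rightarrow> 'c list \<Rightarrow> rat" where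
  "rmul a s = (\<lambda>u. if length s \<le> length u \<and> drop (length u - length s) u = s
                   then a (take (length u - length s) u) else 0)"
definition mul :: "('c list \<Rightarrow> rat) \<Rightarrow> ('c list \<Rightarrow> rat) \<Rightarrow> 'c list \<Rightarrow> rat" where
  "mul a b = (\<lambda>u. \<Sum>i\<in>{0..length u}. a (take i u) * b (drop i u))"

lemma fsupp_supp: "fsupp t \<longleftrightarrow> finite (supp t)"
  by (simp add: fsupp_def supp_def)

lemma ext_eq:
  assumes "finite A" "supp t \<subseteq> A"
  shows "ext F t u = (\<Sum>v\<in>A. t v * F v u)"
  unfolding ext_def
  by (rule sum.mono_neutral_left) (use assms in \<open>auto simp: supp_def\<close>)

lemma ext_zero[simp]: "ext F (\<lambda>_. 0) = (\<lambda>_. 0)"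
  by (simp add: ext_def supp_def)

lemma ext_add:
  assumes "fsupp t" "fsupp t'"
  shows "ext F (\<lambda>u. t u + t' u) u = ext F t u + ext F t' u"
proof -
  let ?A = "supp t \<union> supp t'"
  have f: "finite ?A" using assms by (simp add: fsupp_supp)
  have "ext F (\<lambda>u. t u + t' u) u = (\<Sum>v\<in>?A. (t v + t' v) * F v u)"
    by (rule ext_eq[OF f]) (auto simp: supp_def)
  also have "\<dots> = (\<Sum>v\<in>?A. t v * F v u) + (\<Sum>v\<in>?A. t' v * F v u)"
    by (simp add: distrib_right sum.distrib)
  also have "\<dots> = ext F t u + ext F t' u"
    by (subst (1 2) ext_eq[OF f]) auto
  finally show ?thesis .
qed

lemma ext_scale:
  "ext F (\<lambda>u. a * t u) u = a * ext F t u"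
  by (cases "a = 0") (auto simp: ext_def supp_def sum_distrib_left mult.assoc)

lemma ext_sum:
  assumes "finite I" "\<And>i. i \<in> I \<Longrightarrow> fsupp (t i)"
  shows "ext F (\<lambda>u. \<Sum>i\<in>I. t i u) u = (\<Sum>i\<in>I. ext F (t i) u)"
  using assms
proof (induction I rule: finite_induct)
  case empty
  then show ?case by (simp add: ext_def supp_def)
next
  case (insert x I)
  have fs: "fsupp (\<lambda>u. \<Sum>i\<in>I. t i u)"
  proof -
    have "supp (\<lambda>u. \<Sum>i\<in>I. t i u) \<subseteq> (\<Union>i\<in>I. supp (t i))"
      by (auto simp: supp_def intro: ccontr sum.neutral)
    moreover have "finite (\<Union>i\<in>I. supp (t i))" using insert by (auto simp: fsupp_supp)
    ultimately show ?thesis by (simp add: fsupp_supp finite_subset)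
  qed
  have "ext F (\<lambda>u. \<Sum>i\<in>insert x I. t i u) u = ext F (\<lambda>u. t x u + (\<Sum>i\<in>I. t i u)) u"
    using insert by simp
  also have "\<dots> = ext F (t x) u + ext F (\<lambda>u. \<Sum>i\<in>I. t i u) u"
    using ext_add[OF _ fs, of "t x" F u] insert by simp
  finally show ?case using insert by simp
qed

lemma ext_fun_add: "ext (\<lambda>v u. F v u + G v u) t u = ext F t u + ext G t u"
  by (simp add: ext_def distrib_left sum.distrib)

lemma ext_fun_scale: "ext (\<lambda>v u. a * F v u) t u = a * ext F t u"
  by (simp add: ext_def sum_distrib_left algebra_simps)

lemma ext_fun_cong: "(\<And>v. t v \<noteq> 0 \<Longrightarrow> F v u = G v u) \<Longrightarrow> ext F t u = ext G t u"
  by (auto simp: ext_def supp_def intro!: sum.cong)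

lemma ext_arg_cong: "(\<And>v. F v u \<noteq> 0 \<Longrightarrow> t v = t' v) \<Longrightarrow> fsupp t \<Longrightarrow> fsupp t' \<Longrightarrow> ext F t u = ext F t' u"
proof -
  assume h: "\<And>v. F v u \<noteq> 0 \<Longrightarrow> t v = t' v" and a: "fsupp t" "fsupp t'"
  let ?A = "supp t \<union> supp t'"
  have f: "finite ?A" using a by (simp add: fsupp_supp)
  have "(\<Sum>v\<in>?A. t v * F v u) = (\<Sum>v\<in>?A. t' v * F v u)"
  proof (rule sum.cong[OF refl])
    fix v show "t v * F v u = t' v * F v u" using h[of v] by (cases "F v u = 0") auto
  qed
  then show ?thesis by (subst (1 2) ext_eq[OF f]) auto
qed

lemma ext_nz: "ext F t u \<noteq> 0 \<Longrightarrow> \<exists>v. t v \<noteq> 0 \<and> F v u \<noteq> 0"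
proof (rule ccontr)
  assume "ext F t u \<noteq> 0" "\<not> (\<exists>v. t v \<noteq> 0 \<and> F v u \<noteq> 0)"
  then show False unfolding ext_def by (auto intro!: sum.neutral)
qed

lemma fsupp_ext:
  assumes "fsupp t" "\<And>v. t v \<noteq> 0 \<Longrightarrow> fsupp (F v)"
  shows "fsupp (ext F t)"
proof -
  have "supp (ext F t) \<subseteq> (\<Union>v\<in>supp t. supp (F v))"
    by (auto simp: supp_def dest!: ext_nz)
  moreover have "finite (\<Union>v\<in>supp t. supp (F v))"
    using assms by (auto simp: fsupp_supp supp_def)
  ultimately show ?thesis by (simp add: fsupp_supp finite_subset)
qed

lemma ext_ext:
  assumes "fsupp t" "\<And>v. t v \<noteq> 0 \<Longrightarrow> fsupp (F v)"
  shows "ext G (ext F t) u = ext (\<lambda>v. ext G (F v)) t u"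
proof -
  let ?B = "\<Union>v\<in>supp t. supp (F v)"
  have fB: "finite ?B" using assms by (auto simp: fsupp_supp supp_def)
  have sB: "supp (ext F t) \<subseteq> ?B" by (auto simp: supp_def dest!: ext_nz)
  have "ext G (ext F t) u = (\<Sum>w\<in>?B. ext F t w * G w u)" by (rule ext_eq[OF fB sB])
  also have "\<dots> = (\<Sum>w\<in>?B. \<Sum>v\<in>supp t. t v * F v w * G w u)"
    by (simp add: ext_def sum_distrib_right)
  also have "\<dots> = (\<Sum>v\<in>supp t. \<Sum>w\<in>?B. t v * F v w * G w u)" by (rule sum.swap)
  also have "\<dots> = (\<Sum>v\<in>supp t. t v * ext G (F v) u)"
  proof (rule sum.cong[OF refl])
    fix v assume v: "v \<in> supp t"
    have "ext G (F v) u = (\<Sum>w\<in>?B. F v w * G w u)"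
      by (rule ext_eq[OF fB]) (use v in \<open>auto simp: supp_def\<close>)
    then show "(\<Sum>w\<in>?B. t v * F v w * G w u) = t v * ext G (F v) u"
      by (simp add: sum_distrib_left mult.assoc)
  qed
  also have "\<dots> = ext (\<lambda>v. ext G (F v)) t u" by (simp add: ext_def)
  finally show ?thesis .
qed

lemma ext_sing: "ext F (sing v) = F v"
  by (rule ext) (simp add: ext_def supp_def sing_def)

lemma ext_sing_fun: "fsupp t \<Longrightarrow> ext sing t = t"
proof (rule ext)
  fix u assume "fsupp t"
  have "ext sing t u = (\<Sum>v\<in>supp t \<union> {u}. t v * sing v u)"
    by (rule ext_eq) (use \<open>fsupp t\<close> in \<open>auto simp: fsupp_supp\<close>)
  also have "\<dots> = t u"
    by (subst sum.remove[of _ u]) (use \<open>fsupp t\<close> in \<open>auto simp: sing_def fsupp_supp split: if_splits intro!: sum.neutral\<close>)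
  finally show "ext sing t u = t u" .
qed

lemma fsupp_sing[simp]: "fsupp (sing v)"
  by (simp add: fsupp_def sing_def)
lemma fsupp_zero[simp]: "fsupp (\<lambda>_. 0)" by (simp add: fsupp_def)
lemma fsupp_add: "fsupp a \<Longrightarrow> fsupp b \<Longrightarrow> fsupp (\<lambda>u. a u + b u)"
  unfolding fsupp_def by (rule finite_subset[of _ "{x. a x \<noteq> 0} \<union> {x. b x \<noteq> 0}"]) auto
lemma fsupp_scale: "fsupp a \<Longrightarrow> fsupp (\<lambda>u. c * a u)"
  unfolding fsupp_def by (rule finite_subset[of _ "{x. a x \<noteq> 0}"]) auto
lemma fsupp_neg: "fsupp a \<Longrightarrow> fsupp (\<lambda>u. - a u)"
  unfolding fsupp_def by simp
lemma fsupp_sum: "finite I \<Longrightarrow> (\<And>i. i \<in> I \<Longrightarrow> fsupp (t i)) \<Longrightarrow> fsupp (\<lambda>u. \<Sum>i\<in>I. t i u)"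
  by (induction I rule: finite_induct) (auto intro: fsupp_add)
lemma fsupp_mono: "fsupp a \<Longrightarrow> (\<And>u. b u \<noteq> 0 \<Longrightarrow> a u \<noteq> 0) \<Longrightarrow> fsupp b"
  unfolding fsupp_def by (rule finite_subset[of _ "{x. a x \<noteq> 0}"]) auto


lemma psign_Nil[simp]: "psign cdim [] = 1" by (simp add: psign_def)
lemma psign_append: "psign cdim (p @ q) = psign cdim p * psign cdim q"
  by (auto simp: psign_def)
lemma psign_Cons: "psign cdim (x # p) = psign cdim [x] * psign cdim p"
  using psign_append[of cdim "[x]" p] by simp
lemma psign_sq[simp]: "psign cdim p * psign cdim p = 1"
  by (simp add: psign_def)
lemma psign_Cons2: "psign cdim (x # p) = (if even (cdim x) then -1 else 1) * psign cdim p"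
  by (auto simp: psign_def)
lemma psign_single: "psign cdim [x] = (if even (cdim x) then -1 else 1)"
  by (simp add: psign_def)

fun Dw :: "('c \<Rightarrow> nat) \<Rightarrow> ('c \<Rightarrow> 'c list \<Rightarrow> rat) \<Rightarrow> 'c list \<Rightarrow> 'c list \<Rightarrow> rat" where
  "Dw cdim \<epsilon> [] = (\<lambda>u. 0)"
| "Dw cdim \<epsilon> (x # w) = (\<lambda>u. rmul (\<epsilon> x) w u + psign cdim [x] * lmul [x] (Dw cdim \<epsilon> w) u)"

definition DD :: "('c \<Rightarrow> nat) \<Rightarrow> ('c \<Rightarrow> 'c list \<Rightarrow> rat) \<Rightarrow> ('c list \<Rightarrow> rat) \<Rightarrow> 'c list \<Rightarrow> rat" where
  "DD cdim \<epsilon> t = ext (Dw cdim \<epsilon>) t"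

lemma sum_single:
  assumes "finite A" "k \<in> A" "\<And>j. j \<in> A \<Longrightarrow> j \<noteq> k \<Longrightarrow> f j = 0"
  shows "sum f A = f k"
  using assms by (subst sum.remove[of A k]) (auto intro!: sum.neutral)

lemma rmul_sum:
  "(\<Sum>j\<in>{0..length u}. if w = drop j u then a (take j u) else 0) = rmul a w u"
proof (cases "length w \<le> length u \<and> drop (length u - length w) u = w")
  case True
  then show ?thesis
    by (subst sum_single[of _ "length u - length w"]) (auto simp: rmul_def)
next
  case False
  then show ?thesis
    by (auto simp: rmul_def intro!: sum.neutral)
qed

lemma Dw_closed:
  "Dw cdim \<epsilon> v u = (\<Sum>i\<in>{0..length u}. \<Sum>j\<in>{i..length u}.
      if i < length v \<and> v = take i u @ v ! i # drop j u
      then psign cdim (take i u) * \<epsilon> (v ! i) (take (j - i) (drop i u)) else 0)"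
proof (induction v arbitrary: u)
  case Nil
  then show ?case by simp
next
  case (Cons x w)
  show ?case
  proof (cases u)
    case Nil
    then show ?thesis by (simp add: rmul_def lmul_def)
  next
    case (Cons y u')
    let ?T = "\<lambda>v u i j. if i < length v \<and> v = take i u @ v ! i # drop j u
      then psign cdim (take i u) * \<epsilon> (v ! i) (take (j - i) (drop i u)) else 0"
    have L: "length u = Suc (length u')" using Cons by simp
    have "(\<Sum>i\<in>{0..length u}. \<Sum>j\<in>{i..length u}. ?T (x # w) u i j)
        = (\<Sum>j\<in>{0..length u}. ?T (x # w) u 0 j) + (\<Sum>i\<in>{0..length u'}. \<Sum>j\<in>{Suc i..Suc (length u')}. ?T (x # w) u (Suc i) j)"
      unfolding L by (subst sum.atLeast0_atMost_Suc_shift) simp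
    also have "(\<Sum>j\<in>{0..length u}. ?T (x # w) u 0 j) = rmul (\<epsilon> x) w u"
      by (subst rmul_sum[symmetric]) (auto intro!: sum.cong)
    also have "(\<Sum>i\<in>{0..length u'}. \<Sum>j\<in>{Suc i..Suc (length u')}. ?T (x # w) u (Suc i) j)
        = (\<Sum>i\<in>{0..length u'}. \<Sum>j\<in>{i..length u'}. ?T (x # w) u (Suc i) (Suc j))"
      by (subst sum.shift_bounds_cl_Suc_ivl) simp
    also have "\<dots> = (\<Sum>i\<in>{0..length u'}. \<Sum>j\<in>{i..length u'}.
                       (if y = x then psign cdim [x] * ?T w u' i j else 0))"
      using Cons by (auto intro!: sum.cong simp: psign_Cons2 psign_single)
    also have "\<dots> = psign cdim [x] * lmul [x] (Dw cdim \<epsilon> w) u"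
      using Cons by (auto simp: lmul_def Cons.IH sum_distrib_left intro!: sum.cong)
    finally show ?thesis by simp
  qed
qed

lemma deriv_eq_DD:
  assumes "fsupp t"
  shows "deriv cdim \<epsilon> t u = DD cdim \<epsilon> t u"
proof -
  let ?P = "\<lambda>i. take i u" and ?S = "\<lambda>j. drop j u" and ?M = "\<lambda>i j. take (j - i) (drop i u)"
  have "DD cdim \<epsilon> t u = (\<Sum>v\<in>supp t. \<Sum>i\<in>{0..length u}. \<Sum>j\<in>{i..length u}. t v *
      (if i < length v \<and> v = ?P i @ v ! i # ?S j then psign cdim (?P i) * \<epsilon> (v ! i) (?M i j) else 0))"
    by (simp add: DD_def ext_def Dw_closed sum_distrib_left)
  also have "\<dots> = (\<Sum>i\<in>{0..length u}. \<Sum>j\<in>{i..length u}. \<Sum>v\<in>supp t. t v *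
      (if i < length v \<and> v = ?P i @ v ! i # ?S j then psign cdim (?P i) * \<epsilon> (v ! i) (?M i j) else 0))"
    by (subst sum.swap) (simp add: sum.swap[of _ _ "supp t"])
  also have "\<dots> = deriv cdim \<epsilon> t u"
    unfolding deriv_def
  proof (intro sum.cong refl)
    fix i j assume i: "i \<in> {0..length u}" and j: "j \<in> {i..length u}"
    let ?phi = "\<lambda>c. ?P i @ c # ?S j"
    have inj: "inj ?phi" by (rule injI) simp
    have li: "length (?P i) = i" using i by simp
    have fin: "finite {c. t (?phi c) \<noteq> 0}"
      using finite_vimageI[OF assms[unfolded fsupp_def] inj] by (simp add: vimage_def)
    have img: "?phi ` {c. t (?phi c) \<noteq> 0} \<subseteq> supp t" by (auto simp: supp_def)
    have "(\<Sum>v\<in>supp t. t v * (if i < length v \<and> v = ?P i @ v ! i # ?S j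
            then psign cdim (?P i) * \<epsilon> (v ! i) (?M i j) else 0))
        = (\<Sum>v\<in>?phi ` {c. t (?phi c) \<noteq> 0}. t v * (if i < length v \<and> v = ?P i @ v ! i # ?S j
            then psign cdim (?P i) * \<epsilon> (v ! i) (?M i j) else 0))"
    proof (rule sum.mono_neutral_right)
      show "finite (supp t)" using assms by (simp add: fsupp_supp)
      show "?phi ` {c. t (?phi c) \<noteq> 0} \<subseteq> supp t" by (rule img)
      show "\<forall>v\<in>supp t - ?phi ` {c. t (?phi c) \<noteq> 0}. t v * (if i < length v \<and> v = ?P i @ v ! i # ?S j
            then psign cdim (?P i) * \<epsilon> (v ! i) (?M i j) else 0) = 0"
        by (auto simp: supp_def)
    qed
    also have "\<dots> = (\<Sum>c\<in>{c. t (?phi c) \<noteq> 0}. psign cdim (?P i) * t (?phi c) * \<epsilon> c (?M i j))"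
      by (subst sum.reindex) (use inj li in \<open>auto simp: inj_on_def nth_append intro!: sum.cong\<close>)
    finally show "(\<Sum>v\<in>supp t. t v * (if i < length v \<and> v = ?P i @ v ! i # ?S j
            then psign cdim (?P i) * \<epsilon> (v ! i) (?M i j) else 0))
        = (\<Sum>c\<in>{c. t (?phi c) \<noteq> 0}. psign cdim (?P i) * t (?phi c) * \<epsilon> c (?M i j))" .
  qed
  finally show ?thesis by simp
qed


lemma rmul_app[simp]: "rmul a s (p @ s) = a p"
  by (simp add: rmul_def)
lemma rmul_other: "\<not> (\<exists>p. u = p @ s) \<Longrightarrow> rmul a s u = 0"
  unfolding rmul_def by (metis append_take_drop_id)
lemma rmul_cases: "(\<And>p. u = p @ s \<Longrightarrow> P (a p)) \<Longrightarrow> P 0 \<Longrightarrow> P (rmul a s u)"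
  by (metis rmul_app rmul_other)
lemma lmul_app[simp]: "lmul p b (p @ s) = b s"
  by (simp add: lmul_def)
lemma lmul_other: "\<not> (\<exists>s. u = p @ s) \<Longrightarrow> lmul p b u = 0"
  unfolding lmul_def by (metis append_take_drop_id)
lemma lmul_cases: "(\<And>s. u = p @ s \<Longrightarrow> P (b s)) \<Longrightarrow> P 0 \<Longrightarrow> P (lmul p b u)"
  by (metis lmul_app lmul_other)

lemma rmul_nz: "rmul a s u \<noteq> 0 \<Longrightarrow> \<exists>p. u = p @ s \<and> a p \<noteq> 0"
  by (metis rmul_app rmul_other)
lemma lmul_nz: "lmul p b u \<noteq> 0 \<Longrightarrow> \<exists>s. u = p @ s \<and> b s \<noteq> 0"
  by (metis lmul_app lmul_other)

lemma rmul_eqI: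
  assumes "\<And>p. f (p @ s) = a p" "\<And>u. \<not> (\<exists>p. u = p @ s) \<Longrightarrow> f u = 0"
  shows "rmul a s = f"
proof (rule ext)
  fix u show "rmul a s u = f u"
  proof (cases "\<exists>p. u = p @ s")
    case True then obtain p where "u = p @ s" by blast
    then show ?thesis using assms(1) by simp
  next
    case False then show ?thesis using assms(2) rmul_other by metis
  qed
qed
lemma lmul_eqI:
  assumes "\<And>s. f (p @ s) = b s" "\<And>u. \<not> (\<exists>s. u = p @ s) \<Longrightarrow> f u = 0"
  shows "lmul p b = f"
proof (rule ext)
  fix u show "lmul p b u = f u"
  proof (cases "\<exists>s. u = p @ s")
    case True then obtain s where "u = p @ s" by blast
    then show ?thesis using assms(1) by simp
  next
    case False then show ?thesis using assms(2) lmul_other by metis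
  qed
qed

lemma rmul_Nil[simp]: "rmul a [] = a"
  by (rule rmul_eqI) auto
lemma lmul_Nil[simp]: "lmul [] b = b"
  by (rule lmul_eqI) auto
lemma rmul_zero[simp]: "rmul (\<lambda>_. 0) s = (\<lambda>_. 0)"
  by (rule rmul_eqI) auto
lemma lmul_zero[simp]: "lmul p (\<lambda>_. 0) = (\<lambda>_. 0)"
  by (rule lmul_eqI) auto
lemma rmul_add: "rmul (\<lambda>u. a u + b u) s = (\<lambda>u. rmul a s u + rmul b s u)"
  by (rule rmul_eqI) (auto simp: rmul_other)
lemma lmul_add: "lmul p (\<lambda>u. a u + b u) = (\<lambda>u. lmul p a u + lmul p b u)"
  by (rule lmul_eqI) (auto simp: lmul_other)
lemma rmul_scale: "rmul (\<lambda>u. c * a u) s = (\<lambda>u. c * rmul a s u)"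
  by (rule rmul_eqI) (auto simp: rmul_other)
lemma lmul_scale: "lmul p (\<lambda>u. c * a u) = (\<lambda>u. c * lmul p a u)"
  by (rule lmul_eqI) (auto simp: lmul_other)

lemma rmul_rmul: "rmul (rmul a s) s' = rmul a (s @ s')"
proof (rule rmul_eqI[symmetric])
  fix p show "rmul (rmul a s) s' (p @ s @ s') = a p"
    using rmul_app[of "rmul a s" s' "p @ s"] by simp
next
  fix u assume nu: "\<not> (\<exists>p. u = p @ s @ s')"
  show "rmul (rmul a s) s' u = 0"
  proof (rule ccontr)
    assume "rmul (rmul a s) s' u \<noteq> 0"
    then obtain q where q: "u = q @ s'" "rmul a s q \<noteq> 0" using rmul_nz by blast
    then obtain p where "q = p @ s" using rmul_nz by blast
    then show False using nu q by simp
  qed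
qed

lemma lmul_lmul: "lmul p (lmul q b) = lmul (p @ q) b"
proof (rule lmul_eqI[symmetric])
  fix s show "lmul p (lmul q b) ((p @ q) @ s) = b s"
    by simp
next
  fix u assume nu: "\<not> (\<exists>s. u = (p @ q) @ s)"
  show "lmul p (lmul q b) u = 0"
  proof (rule ccontr)
    assume "lmul p (lmul q b) u \<noteq> 0"
    then obtain m where m: "u = p @ m" "lmul q b m \<noteq> 0" using lmul_nz by blast
    then obtain s where "m = q @ s" using lmul_nz by blast
    then show False using nu m by simp
  qed
qed

lemma lmul_rmul: "lmul p (rmul b s) = rmul (lmul p b) s"
proof (rule ext)
  fix u
  show "lmul p (rmul b s) u = rmul (lmul p b) s u"
  proof (cases "\<exists>m. u = p @ m @ s")
    case True
    then obtain m where "u = p @ m @ s" by blast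
    then show ?thesis by (metis append.assoc lmul_app rmul_app)
  next
    case False
    have "lmul p (rmul b s) u = 0"
    proof (rule ccontr)
      assume "lmul p (rmul b s) u \<noteq> 0"
      then obtain m where m: "u = p @ m" "rmul b s m \<noteq> 0" using lmul_nz by blast
      then obtain q where "m = q @ s" using rmul_nz by blast
      then show False using False m by simp
    qed
    moreover have "rmul (lmul p b) s u = 0"
    proof (rule ccontr)
      assume "rmul (lmul p b) s u \<noteq> 0"
      then obtain m where m: "u = m @ s" "lmul p b m \<noteq> 0" using rmul_nz by blast
      then obtain q where "m = p @ q" using lmul_nz by blast
      then show False using False m by simp
    qed
    ultimately show ?thesis by simp
  qed
qed

lemma rmul_sing: "rmul (sing v) s = sing (v @ s)"
  by (rule rmul_eqI) (auto simp: sing_def)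
lemma lmul_sing: "lmul p (sing v) = sing (p @ v)"
  by (rule lmul_eqI) (auto simp: sing_def)

lemma rmul_ext: "rmul (ext F t) s u = ext (\<lambda>v. rmul (F v) s) t u"
proof (cases "\<exists>p. u = p @ s")
  case True then obtain p where "u = p @ s" by blast
  then show ?thesis by (simp add: ext_def)
next
  case False then show ?thesis by (simp add: ext_def rmul_other)
qed
lemma lmul_ext: "lmul p (ext F t) u = ext (\<lambda>v. lmul p (F v)) t u"
proof (cases "\<exists>s. u = p @ s")
  case True then obtain s where "u = p @ s" by blast
  then show ?thesis by (simp add: ext_def)
next
  case False then show ?thesis by (simp add: ext_def lmul_other)
qed

lemma fsupp_rmul: "fsupp a \<Longrightarrow> fsupp (rmul a s)"
proof -
  assume "fsupp a"
  have "{u. rmul a s u \<noteq> 0} \<subseteq> (\<lambda>p. p @ s) ` {p. a p \<noteq> 0}"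
    by (auto dest!: rmul_nz)
  then show ?thesis using \<open>fsupp a\<close> unfolding fsupp_def by (metis finite_imageI finite_subset)
qed
lemma fsupp_lmul: "fsupp b \<Longrightarrow> fsupp (lmul p b)"
proof -
  assume "fsupp b"
  have "{u. lmul p b u \<noteq> 0} \<subseteq> (\<lambda>s. p @ s) ` {s. b s \<noteq> 0}"
    by (auto dest!: lmul_nz)
  then show ?thesis using \<open>fsupp b\<close> unfolding fsupp_def by (metis finite_imageI finite_subset)
qed

lemma prefixes_sum:
  assumes "fsupp a"
  shows "ext (\<lambda>v. lmul v b) a u = (\<Sum>i\<in>{0..length u}. a (take i u) * b (drop i u))"
proof -
  let ?pre = "(\<lambda>i. take i u) ` {0..length u}"
  have f: "finite (supp a \<union> ?pre)" using assms by (simp add: fsupp_supp)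
  have "ext (\<lambda>v. lmul v b) a u = (\<Sum>v\<in>supp a \<union> ?pre. a v * lmul v b u)"
    by (rule ext_eq[OF f]) auto
  also have "\<dots> = (\<Sum>v\<in>?pre. a v * lmul v b u)"
  proof (rule sum.mono_neutral_right[OF f])
    show "?pre \<subseteq> supp a \<union> ?pre" by auto
    show "\<forall>v\<in>supp a \<union> ?pre - ?pre. a v * lmul v b u = 0"
    proof
      fix v assume "v \<in> supp a \<union> ?pre - ?pre"
      then have nv: "v \<notin> ?pre" by blast
      have "\<not> (\<exists>s. u = v @ s)"
      proof
        assume "\<exists>s. u = v @ s" then obtain s where "u = v @ s" by blast
        then have "v = take (length v) u" "length v \<in> {0..length u}" by auto
        then show False using nv by blast
      qed
      then show "a v * lmul v b u = 0" by (simp add: lmul_other)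
    qed
  qed
  also have "\<dots> = (\<Sum>i\<in>{0..length u}. a (take i u) * lmul (take i u) b u)"
  proof (subst sum.reindex)
    show "inj_on (\<lambda>i. take i u) {0..length u}"
      by (auto simp: inj_on_def) (metis length_take min.absorb2)
  qed auto
  also have "\<dots> = (\<Sum>i\<in>{0..length u}. a (take i u) * b (drop i u))"
    by (intro sum.cong refl) (metis append_take_drop_id lmul_app)
  finally show ?thesis .
qed

lemma suffixes_sum:
  assumes "fsupp b"
  shows "ext (\<lambda>v. rmul a v) b u = (\<Sum>i\<in>{0..length u}. a (take i u) * b (drop i u))"
proof -
  let ?suf = "(\<lambda>i. drop i u) ` {0..length u}"
  have f: "finite (supp b \<union> ?suf)" using assms by (simp add: fsupp_supp)
  have "ext (\<lambda>v. rmul a v) b u = (\<Sum>v\<in>supp b \<union> ?suf. b v * rmul a v u)"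
    by (rule ext_eq[OF f]) auto
  also have "\<dots> = (\<Sum>v\<in>?suf. b v * rmul a v u)"
  proof (rule sum.mono_neutral_right[OF f])
    show "?suf \<subseteq> supp b \<union> ?suf" by auto
    show "\<forall>v\<in>supp b \<union> ?suf - ?suf. b v * rmul a v u = 0"
    proof
      fix v assume "v \<in> supp b \<union> ?suf - ?suf"
      then have nv: "v \<notin> ?suf" by blast
      have "\<not> (\<exists>p. u = p @ v)"
      proof
        assume "\<exists>p. u = p @ v" then obtain p where "u = p @ v" by blast
        then have "v = drop (length p) u" "length p \<in> {0..length u}" by auto
        then show False using nv by blast
      qed
      then show "b v * rmul a v u = 0" by (simp add: rmul_other)
    qed
  qed
  also have "\<dots> = (\<Sum>i\<in>{0..length u}. b (drop i u) * rmul a (drop i u) u)"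
  proof (subst sum.reindex)
    show "inj_on (\<lambda>i. drop i u) {0..length u}"
      by (auto simp: inj_on_def) (metis diff_diff_cancel length_drop)
  qed auto
  also have "\<dots> = (\<Sum>i\<in>{0..length u}. a (take i u) * b (drop i u))"
    by (intro sum.cong refl) (metis append_take_drop_id rmul_app mult.commute)
  finally show ?thesis .
qed

lemma mul_comm_ext:
  "fsupp a \<Longrightarrow> fsupp b \<Longrightarrow> ext (\<lambda>v. lmul v b) a u = ext (\<lambda>v. rmul a v) b u"
  by (simp add: prefixes_sum suffixes_sum)


lemma Dw_single[simp]: "Dw cdim \<epsilon> [x] = \<epsilon> x"
  by simp

lemma Dw_add_eps: "Dw cdim (\<lambda>c w. \<epsilon> c w + \<epsilon>' c w) v = (\<lambda>u. Dw cdim \<epsilon> v u + Dw cdim \<epsilon>' v u)"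
  by (induction v) (simp_all add: rmul_add lmul_add algebra_simps)

lemma Dw_append:
  "Dw cdim \<epsilon> (v @ v') = (\<lambda>u. rmul (Dw cdim \<epsilon> v) v' u + psign cdim v * lmul v (Dw cdim \<epsilon> v') u)"
proof (induction v)
  case Nil
  then show ?case by simp
next
  case (Cons x v)
  have "Dw cdim \<epsilon> ((x # v) @ v') = (\<lambda>u. rmul (\<epsilon> x) (v @ v') u + psign cdim [x] *
      lmul [x] (\<lambda>u. rmul (Dw cdim \<epsilon> v) v' u + psign cdim v * lmul v (Dw cdim \<epsilon> v') u) u)"
    using Cons by simp
  also have "\<dots> = (\<lambda>u. rmul (Dw cdim \<epsilon> (x # v)) v' u + psign cdim (x # v) * lmul (x # v) (Dw cdim \<epsilon> v') u)"
    by (simp add: lmul_add lmul_scale lmul_rmul lmul_lmul rmul_add rmul_scale rmul_rmul psign_Cons[of cdim x v] algebra_simps)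
  finally show ?case .
qed

lemma fsupp_Dw: "(\<And>c. c \<in> set v \<Longrightarrow> fsupp (\<epsilon> c)) \<Longrightarrow> fsupp (Dw cdim \<epsilon> v)"
  by (induction v) (auto intro!: fsupp_add fsupp_scale fsupp_rmul fsupp_lmul)

lemma Dw_nz: "Dw cdim \<epsilon> v u \<noteq> 0 \<Longrightarrow> \<exists>p c s w. v = p @ c # s \<and> u = p @ w @ s \<and> \<epsilon> c w \<noteq> 0"
proof (induction v arbitrary: u)
  case Nil
  then show ?case by simp
next
  case (Cons x v)
  then have "rmul (\<epsilon> x) v u \<noteq> 0 \<or> lmul [x] (Dw cdim \<epsilon> v) u \<noteq> 0" by auto
  then show ?case
  proof
    assume "rmul (\<epsilon> x) v u \<noteq> 0"
    then obtain m where "u = m @ v" "\<epsilon> x m \<noteq> 0" using rmul_nz by blast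
    then show ?thesis by (intro exI[of _ "[]"] exI[of _ x] exI[of _ v] exI[of _ m]) simp
  next
    assume "lmul [x] (Dw cdim \<epsilon> v) u \<noteq> 0"
    then obtain u' where u': "u = [x] @ u'" "Dw cdim \<epsilon> v u' \<noteq> 0" using lmul_nz by blast
    obtain p c s w where pc: "v = p @ c # s" "u' = p @ w @ s" "\<epsilon> c w \<noteq> 0" using Cons.IH[OF u'(2)] by blast
    have "x # v = (x # p) @ c # s" "u = (x # p) @ w @ s" using pc(1,2) u'(1) by simp_all
    then show ?thesis using pc(3) by blast
  qed
qed

lemma Dw_cong:
  assumes "\<And>c w. length u + 1 = length v + length w \<Longrightarrow> \<epsilon> c w = \<epsilon>' c w"
  shows "Dw cdim \<epsilon> v u = Dw cdim \<epsilon>' v u"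
  unfolding Dw_closed
proof (intro sum.cong refl)
  fix i j assume i: "i \<in> {0..length u}" and j: "j \<in> {i..length u}"
  show "(if i < length v \<and> v = take i u @ v ! i # drop j u
         then psign cdim (take i u) * \<epsilon> (v ! i) (take (j - i) (drop i u)) else 0) =
        (if i < length v \<and> v = take i u @ v ! i # drop j u
         then psign cdim (take i u) * \<epsilon>' (v ! i) (take (j - i) (drop i u)) else 0)"
  proof (cases "i < length v \<and> v = take i u @ v ! i # drop j u")
    case True
    then have e: "v = take i u @ v ! i # drop j u" by blast
    have "length v = length (take i u @ v ! i # drop j u)" using arg_cong[OF e, of length] .
    then have "length v = i + 1 + (length u - j)" using i j by simp
    then have "length u + 1 = length v + length (take (j - i) (drop i u))" using i j by auto
    then have eq: "\<epsilon> (v ! i) (take (j - i) (drop i u)) = \<epsilon>' (v ! i) (take (j - i) (drop i u))" by (rule assms)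
    show ?thesis unfolding if_P[OF True] eq ..
  next
    case False
    show ?thesis unfolding if_not_P[OF False] ..
  qed
qed

definition Phi :: "('c \<Rightarrow> nat) \<Rightarrow> ('c \<Rightarrow> 'c list \<Rightarrow> rat) \<Rightarrow> 'c list \<Rightarrow> 'c list \<Rightarrow> rat" where
  "Phi cdim \<epsilon> v = DD cdim \<epsilon> (Dw cdim \<epsilon> v)"

lemma DD_add_t: "fsupp t \<Longrightarrow> fsupp t' \<Longrightarrow> DD cdim \<epsilon> (\<lambda>u. t u + t' u) u = DD cdim \<epsilon> t u + DD cdim \<epsilon> t' u"
  by (simp add: DD_def ext_add)
lemma DD_scale_t: "DD cdim \<epsilon> (\<lambda>u. a * t u) u = a * DD cdim \<epsilon> t u"
  by (simp add: DD_def ext_scale)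
lemma DD_sum_t: "finite I \<Longrightarrow> (\<And>i. i \<in> I \<Longrightarrow> fsupp (t i)) \<Longrightarrow>
    DD cdim \<epsilon> (\<lambda>u. \<Sum>i\<in>I. t i u) u = (\<Sum>i\<in>I. DD cdim \<epsilon> (t i) u)"
  by (simp add: DD_def ext_sum)
lemma DD_add_eps: "DD cdim (\<lambda>c w. \<epsilon> c w + \<epsilon>' c w) t u = DD cdim \<epsilon> t u + DD cdim \<epsilon>' t u"
  unfolding DD_def Dw_add_eps by (rule ext_fun_add)
lemma DD_zero[simp]: "DD cdim \<epsilon> (\<lambda>_. 0) = (\<lambda>_. 0)"
  by (simp add: DD_def)
lemma DD_sing: "DD cdim \<epsilon> (sing v) = Dw cdim \<epsilon> v"
  by (simp add: DD_def ext_sing)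

lemma DD_nz: "DD cdim \<epsilon> t u \<noteq> 0 \<Longrightarrow> \<exists>v p c s w. t v \<noteq> 0 \<and> v = p @ c # s \<and> u = p @ w @ s \<and> \<epsilon> c w \<noteq> 0"
  unfolding DD_def by (drule ext_nz) (blast dest: Dw_nz)

lemma DD_cong_eps:
  assumes "\<And>v c w. t v \<noteq> 0 \<Longrightarrow> length u + 1 = length v + length w \<Longrightarrow> \<epsilon> c w = \<epsilon>' c w"
  shows "DD cdim \<epsilon> t u = DD cdim \<epsilon>' t u"
  unfolding DD_def by (rule ext_fun_cong) (rule Dw_cong, rule assms)

lemma DD_cong_t:
  assumes "fsupp t" "fsupp t'"
    and "\<And>v c w. \<epsilon> c w \<noteq> 0 \<Longrightarrow> length u + 1 = length v + length w \<Longrightarrow> t v = t' v"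
  shows "DD cdim \<epsilon> t u = DD cdim \<epsilon> t' u"
  unfolding DD_def
proof (rule ext_arg_cong[OF _ assms(1,2)])
  fix v assume "Dw cdim \<epsilon> v u \<noteq> 0"
  then obtain p c s w where "v = p @ c # s \<and> u = p @ w @ s \<and> \<epsilon> c w \<noteq> 0" using Dw_nz by blast
  then show "t v = t' v" using assms(3)[of c w v] by auto
qed

lemma fsupp_DD: "fsupp t \<Longrightarrow> (\<And>c. fsupp (\<epsilon> c)) \<Longrightarrow> fsupp (DD cdim \<epsilon> t)"
  unfolding DD_def by (rule fsupp_ext) (auto intro: fsupp_Dw)

lemma rmul_as_ext: "fsupp a \<Longrightarrow> rmul a s = ext (\<lambda>v. sing (v @ s)) a"
proof (rule ext)
  fix u assume "fsupp a"
  have "rmul a s u = rmul (ext sing a) s u" using ext_sing_fun[OF \<open>fsupp a\<close>] by simp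
  also have "\<dots> = ext (\<lambda>v. sing (v @ s)) a u" by (simp add: rmul_ext rmul_sing)
  finally show "rmul a s u = ext (\<lambda>v. sing (v @ s)) a u" .
qed

lemma lmul_as_ext: "fsupp b \<Longrightarrow> lmul p b = ext (\<lambda>v. sing (p @ v)) b"
proof (rule ext)
  fix u assume "fsupp b"
  have "lmul p b u = lmul p (ext sing b) u" using ext_sing_fun[OF \<open>fsupp b\<close>] by simp
  also have "\<dots> = ext (\<lambda>v. sing (p @ v)) b u" by (simp add: lmul_ext lmul_sing)
  finally show "lmul p b u = ext (\<lambda>v. sing (p @ v)) b u" .
qed

lemma DD_ext: "fsupp t \<Longrightarrow> (\<And>v. t v \<noteq> 0 \<Longrightarrow> fsupp (F v)) \<Longrightarrow>
    DD cdim \<epsilon> (ext F t) u = ext (\<lambda>v. DD cdim \<epsilon> (F v)) t u"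
  unfolding DD_def by (rule ext_ext)

lemma DD_rmul:
  assumes "fsupp a"
  shows "DD cdim \<epsilon> (rmul a s) u = rmul (DD cdim \<epsilon> a) s u + ext (\<lambda>v u. psign cdim v * lmul v (Dw cdim \<epsilon> s) u) a u"
proof -
  have "DD cdim \<epsilon> (rmul a s) u = ext (\<lambda>v. DD cdim \<epsilon> (sing (v @ s))) a u"
    unfolding rmul_as_ext[OF assms] by (rule DD_ext[OF assms]) simp
  also have "\<dots> = ext (\<lambda>v u. rmul (Dw cdim \<epsilon> v) s u + psign cdim v * lmul v (Dw cdim \<epsilon> s) u) a u"
    by (simp add: DD_sing Dw_append)
  also have "\<dots> = ext (\<lambda>v. rmul (Dw cdim \<epsilon> v) s) a u + ext (\<lambda>v u. psign cdim v * lmul v (Dw cdim \<epsilon> s) u) a u"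
    by (rule ext_fun_add)
  also have "ext (\<lambda>v. rmul (Dw cdim \<epsilon> v) s) a u = rmul (DD cdim \<epsilon> a) s u"
    by (simp add: DD_def rmul_ext)
  finally show ?thesis .
qed

lemma DD_lmul:
  assumes "fsupp b"
  shows "DD cdim \<epsilon> (lmul p b) u = ext (\<lambda>v. rmul (Dw cdim \<epsilon> p) v) b u + psign cdim p * lmul p (DD cdim \<epsilon> b) u"
proof -
  have "DD cdim \<epsilon> (lmul p b) u = ext (\<lambda>v. DD cdim \<epsilon> (sing (p @ v))) b u"
    unfolding lmul_as_ext[OF assms] by (rule DD_ext[OF assms]) simp
  also have "\<dots> = ext (\<lambda>v u. rmul (Dw cdim \<epsilon> p) v u + psign cdim p * lmul p (Dw cdim \<epsilon> v) u) b u"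
    by (simp add: DD_sing Dw_append)
  also have "\<dots> = ext (\<lambda>v. rmul (Dw cdim \<epsilon> p) v) b u + ext (\<lambda>v u. psign cdim p * lmul p (Dw cdim \<epsilon> v) u) b u"
    by (rule ext_fun_add)
  also have "ext (\<lambda>v u. psign cdim p * lmul p (Dw cdim \<epsilon> v) u) b u = psign cdim p * lmul p (DD cdim \<epsilon> b) u"
    by (simp add: ext_fun_scale DD_def lmul_ext)
  finally show ?thesis .
qed

definition nice :: "('c \<Rightarrow> nat) \<Rightarrow> ('c \<Rightarrow> 'c list \<Rightarrow> rat) \<Rightarrow> bool" where
  "nice cdim \<epsilon> \<longleftrightarrow> (\<forall>c. fsupp (\<epsilon> c)) \<and> (\<forall>c w. \<epsilon> c w \<noteq> 0 \<longrightarrow> psign cdim w = - psign cdim [c])"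

lemma Phi_Nil[simp]: "Phi cdim \<epsilon> [] = (\<lambda>_. 0)"
  by (simp add: Phi_def)

lemma Phi_Cons:
  assumes "nice cdim \<epsilon>"
  shows "Phi cdim \<epsilon> (x # w) u = rmul (Phi cdim \<epsilon> [x]) w u + lmul [x] (Phi cdim \<epsilon> w) u"
proof -
  have fe: "\<And>c. fsupp (\<epsilon> c)" and par: "\<And>c w. \<epsilon> c w \<noteq> 0 \<Longrightarrow> psign cdim w = - psign cdim [c]"
    using assms by (auto simp: nice_def)
  have fw: "fsupp (Dw cdim \<epsilon> w)" by (rule fsupp_Dw) (rule fe)
  let ?s = "psign cdim [x]"
  let ?M = "ext (\<lambda>v. rmul (\<epsilon> x) v) (Dw cdim \<epsilon> w) u"
  have "Phi cdim \<epsilon> (x # w) u = DD cdim \<epsilon> (rmul (\<epsilon> x) w) u + ?s * DD cdim \<epsilon> (lmul [x] (Dw cdim \<epsilon> w)) u"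
    unfolding Phi_def Dw.simps
    by (subst DD_add_t) (auto intro!: fsupp_rmul fsupp_scale fsupp_lmul fe fw simp: DD_scale_t)
  also have "DD cdim \<epsilon> (rmul (\<epsilon> x) w) u = rmul (Phi cdim \<epsilon> [x]) w u - ?s * ?M"
  proof -
    have "ext (\<lambda>v u. psign cdim v * lmul v (Dw cdim \<epsilon> w) u) (\<epsilon> x) u = ext (\<lambda>v u. - ?s * lmul v (Dw cdim \<epsilon> w) u) (\<epsilon> x) u"
      by (rule ext_fun_cong) (simp add: par)
    also have "\<dots> = - ?s * ext (\<lambda>v. lmul v (Dw cdim \<epsilon> w)) (\<epsilon> x) u"
      by (rule ext_fun_scale)
    also have "ext (\<lambda>v. lmul v (Dw cdim \<epsilon> w)) (\<epsilon> x) u = ?M"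
      by (rule mul_comm_ext[OF fe fw])
    finally show ?thesis by (simp add: DD_rmul[OF fe] Phi_def)
  qed
  also have "DD cdim \<epsilon> (lmul [x] (Dw cdim \<epsilon> w)) u = ?M + ?s * lmul [x] (Phi cdim \<epsilon> w) u"
    by (simp add: DD_lmul[OF fw] Phi_def)
  finally have "Phi cdim \<epsilon> (x # w) u = (rmul (Phi cdim \<epsilon> [x]) w u - ?s * ?M) + ?s * (?M + ?s * lmul [x] (Phi cdim \<epsilon> w) u)" .
  also have "\<dots> = rmul (Phi cdim \<epsilon> [x]) w u + (?s * ?s) * lmul [x] (Phi cdim \<epsilon> w) u"
    by (simp only: ring_distribs mult.assoc)
  finally show ?thesis by simp
qed

lemma Phi_len:
  assumes "nice cdim \<epsilon>" "\<And>x u. length u < k \<Longrightarrow> Phi cdim \<epsilon> [x] u = 0"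
  shows "Phi cdim \<epsilon> v u \<noteq> 0 \<Longrightarrow> length v + k \<le> length u + 1"
proof (induction v arbitrary: u)
  case Nil
  then show ?case by simp
next
  case (Cons x w)
  then have "rmul (Phi cdim \<epsilon> [x]) w u \<noteq> 0 \<or> lmul [x] (Phi cdim \<epsilon> w) u \<noteq> 0"
    using Phi_Cons[OF assms(1)] by auto
  then show ?case
  proof
    assume "rmul (Phi cdim \<epsilon> [x]) w u \<noteq> 0"
    then obtain m where "u = m @ w" "Phi cdim \<epsilon> [x] m \<noteq> 0" using rmul_nz by blast
    have "\<not> length m < k" using assms(2)[of m x] \<open>Phi cdim \<epsilon> [x] m \<noteq> 0\<close> by blast
    then show ?thesis using \<open>u = m @ w\<close> by simp
  next
    assume "lmul [x] (Phi cdim \<epsilon> w) u \<noteq> 0"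
    then obtain u' where u': "u = [x] @ u'" "Phi cdim \<epsilon> w u' \<noteq> 0" using lmul_nz by blast
    have "length w + k \<le> length u' + 1" using Cons.IH u'(2) by blast
    then show ?thesis using u'(1) by simp
  qed
qed


lemma ext_letters:
  assumes "fsupp t" "finite A" "\<And>v. t v \<noteq> 0 \<Longrightarrow> G v u \<noteq> 0 \<Longrightarrow> \<exists>f\<in>A. v = [f]"
  shows "ext G t u = (\<Sum>f\<in>A. t [f] * G [f] u)"
proof -
  let ?B = "supp t \<union> (\<lambda>f. [f]) ` A"
  have fB: "finite ?B" using assms by (simp add: fsupp_supp)
  have "ext G t u = (\<Sum>v\<in>?B. t v * G v u)" by (rule ext_eq[OF fB]) auto
  also have "\<dots> = (\<Sum>v\<in>(\<lambda>f. [f]) ` A. t v * G v u)"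
  proof (rule sum.mono_neutral_right[OF fB])
    show "\<forall>v\<in>?B - (\<lambda>f. [f]) ` A. t v * G v u = 0"
      using assms(3) by fastforce
  qed auto
  also have "\<dots> = (\<Sum>f\<in>A. t [f] * G [f] u)"
    by (subst sum.reindex) (auto simp: inj_on_def)
  finally show ?thesis .
qed

definition emb :: "('c \<Rightarrow> rat) \<Rightarrow> 'c list \<Rightarrow> rat" where
  "emb z = (\<lambda>v. if length v = 1 then z (v ! 0) else 0)"

lemma emb_single[simp]: "emb z [x] = z x"
  by (simp add: emb_def)

lemma emb_nz: "emb z v \<noteq> 0 \<Longrightarrow> \<exists>x. v = [x] \<and> z x \<noteq> 0"
  by (cases v) (auto simp: emb_def split: if_splits)

lemma fsupp_emb: "fsupp z \<Longrightarrow> fsupp (emb z)"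
proof -
  assume "fsupp z"
  have "{v. emb z v \<noteq> 0} \<subseteq> (\<lambda>x. [x]) ` {x. z x \<noteq> 0}" by (auto dest!: emb_nz)
  then show ?thesis using \<open>fsupp z\<close> unfolding fsupp_def by (meson finite_imageI finite_subset)
qed

locale CX =
  fixes cdim :: "'c \<Rightarrow> nat" and bd :: "'c \<Rightarrow> 'c \<Rightarrow> rat" and cl :: "'c \<Rightarrow> 'c set"
  assumes cx: "cell_complex cdim bd cl"
begin

lemma cl_self: "e \<in> cl e" and cl_fin: "finite (cl e)"
  and cl_trans: "f \<in> cl e \<Longrightarrow> cl f \<subseteq> cl e"
  and cl_dim: "f \<in> cl e \<Longrightarrow> f \<noteq> e \<Longrightarrow> cdim f < cdim e"
  and bd_nz: "bd e f \<noteq> 0 \<Longrightarrow> f \<in> cl e \<and> cdim f + 1 = cdim e"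
  and bdbd: "(\<Sum>f\<in>cl e. bd e f * bd f g) = 0"
  and bd_aug: "cdim e = 1 \<Longrightarrow> (\<Sum>f\<in>cl e. bd e f) = 0"
  using cx unfolding cell_complex_def by blast+

lemma cl0: "cdim e = 0 \<Longrightarrow> cl e = {e}"
  using cl_self cl_dim by fastforce

lemma bd0: "cdim e = 0 \<Longrightarrow> bd e f = 0"
  using bd_nz by fastforce

lemma bdbd_gen:
  "(\<Sum>f\<in>cl c. bd c f * (\<Sum>g\<in>cl f. bd f g * X g)) = 0"
proof -
  have "(\<Sum>f\<in>cl c. bd c f * (\<Sum>g\<in>cl f. bd f g * X g)) = (\<Sum>f\<in>cl c. \<Sum>g\<in>cl c. bd c f * bd f g * X g)"
  proof (rule sum.cong[OF refl])
    fix f assume f: "f \<in> cl c"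
    have "(\<Sum>g\<in>cl f. bd f g * X g) = (\<Sum>g\<in>cl c. bd f g * X g)"
    proof (rule sum.mono_neutral_left)
      show "finite (cl c)" by (rule cl_fin)
      show "cl f \<subseteq> cl c" using f cl_trans by blast
      show "\<forall>g\<in>cl c - cl f. bd f g * X g = 0" by (metis DiffE bd_nz mult_zero_left)
    qed
    then show "bd c f * (\<Sum>g\<in>cl f. bd f g * X g) = (\<Sum>g\<in>cl c. bd c f * bd f g * X g)"
      by (simp add: sum_distrib_left mult.assoc)
  qed
  also have "\<dots> = (\<Sum>g\<in>cl c. (\<Sum>f\<in>cl c. bd c f * bd f g) * X g)"
    by (subst sum.swap) (simp add: sum_distrib_right)
  also have "\<dots> = 0" by (simp add: bdbd)
  finally show ?thesis .
qed

definition e1 :: "'c \<Rightarrow> 'c list \<Rightarrow> rat" where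
  "e1 c w = (if length w = 1 then bd c (w ! 0) else 0)"

abbreviation dd :: "('c list \<Rightarrow> rat) \<Rightarrow> 'c list \<Rightarrow> rat" where
  "dd \<equiv> DD cdim e1"

lemma e1_nz: "e1 c w \<noteq> 0 \<Longrightarrow> \<exists>f. w = [f] \<and> bd c f \<noteq> 0"
  by (cases w) (auto simp: e1_def split: if_splits)

lemma e1_sum: "e1 c = (\<lambda>u. \<Sum>f\<in>cl c. bd c f * sing [f] u)"
proof (rule ext)
  fix u
  show "e1 c u = (\<Sum>f\<in>cl c. bd c f * sing [f] u)"
  proof (cases "\<exists>f. u = [f]")
    case True
    then obtain f where u: "u = [f]" by blast
    show ?thesis
    proof (cases "f \<in> cl c")
      case True
      then show ?thesis using u by (subst sum_single[of _ f]) (auto simp: e1_def sing_def cl_fin)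
    next
      case False
      have "bd c f = 0" using False bd_nz by blast
      moreover have "(\<Sum>fa\<in>cl c. bd c fa * sing [fa] u) = 0" using False u by (auto simp: sing_def intro!: sum.neutral)
      ultimately show ?thesis using u by (simp add: e1_def)
    qed
  next
    case False
    have "e1 c u = 0" using False e1_nz by blast
    moreover have "(\<Sum>f\<in>cl c. bd c f * sing [f] u) = 0" using False by (auto simp: sing_def intro!: sum.neutral)
    ultimately show ?thesis by simp
  qed
qed

lemma fsupp_e1: "fsupp (e1 c)"
  by (subst e1_sum) (auto intro!: fsupp_sum fsupp_scale cl_fin)

lemma e1_zero0: "cdim c = 0 \<Longrightarrow> e1 c = (\<lambda>_. 0)"
  by (rule ext) (auto simp: e1_def bd0)

lemma psign_dim: "psign cdim [x] = psign cdim [y] \<longleftrightarrow> even (cdim x) = even (cdim y)"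
  by (simp add: psign_single)

lemma nice_e1: "nice cdim e1"
  unfolding nice_def
proof (intro conjI allI impI)
  fix c show "fsupp (e1 c)" by (rule fsupp_e1)
next
  fix c w assume "e1 c w \<noteq> 0"
  then obtain f where "w = [f]" "bd c f \<noteq> 0" using e1_nz by blast
  then have "cdim f + 1 = cdim c" using bd_nz by blast
  then have "even (cdim c) = odd (cdim f)" by (metis even_Suc Suc_eq_plus1)
  then show "psign cdim w = - psign cdim [c]" using \<open>w = [f]\<close> by (auto simp: psign_single)
qed

lemma DD_e1: "DD cdim F (e1 x) u = (\<Sum>f\<in>cl x. bd x f * F f u)"
proof -
  have "DD cdim F (e1 x) u = (\<Sum>f\<in>cl x. e1 x [f] * Dw cdim F [f] u)"
    unfolding DD_def
  proof (rule ext_letters[OF fsupp_e1 cl_fin])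
    fix v assume "e1 x v \<noteq> 0"
    then show "\<exists>f\<in>cl x. v = [f]" using e1_nz bd_nz by blast
  qed
  then show ?thesis by (simp add: e1_def)
qed

lemma Phi_e1: "Phi cdim e1 v u = 0"
proof -
  have z: "Phi cdim e1 [x] u' = 0" for x u'
  proof -
    have "Phi cdim e1 [x] u' = (\<Sum>f\<in>cl x. bd x f * e1 f u')"
      by (simp add: Phi_def DD_e1)
    also have "\<dots> = 0"
    proof (cases "length u' = 1")
      case True
      then show ?thesis by (simp add: e1_def bdbd)
    qed (simp add: e1_def)
    finally show ?thesis .
  qed
  show ?thesis
  proof (rule ccontr)
    assume "Phi cdim e1 v u \<noteq> 0"
    then have "length v + (length u + 2) \<le> length u + 1"
      by (rule Phi_len[OF nice_e1, rotated]) (rule z)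
    then show False by simp
  qed
qed

lemma dd_dd: "fsupp t \<Longrightarrow> dd (dd t) u = 0"
  unfolding DD_def[of cdim e1 t]
  by (subst DD_ext) (auto intro: fsupp_Dw fsupp_e1 simp: Phi_e1 Phi_def[symmetric] ext_def)

lemma dd_emb: "fsupp z \<Longrightarrow> dd (emb z) = emb (chain_bd bd z)"
proof (rule ext)
  fix u assume fz: "fsupp z"
  have "dd (emb z) u = (\<Sum>x\<in>{x. z x \<noteq> 0}. emb z [x] * Dw cdim e1 [x] u)"
    unfolding DD_def
  proof (rule ext_letters[OF fsupp_emb[OF fz]])
    show "finite {x. z x \<noteq> 0}" using fz by (simp add: fsupp_def)
  qed (auto dest!: emb_nz)
  also have "\<dots> = emb (chain_bd bd z) u"
    by (auto simp: emb_def chain_bd_def e1_def)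
  finally show "dd (emb z) u = emb (chain_bd bd z) u" .
qed

end

lemma DD_neg_t: "DD cdim \<epsilon> (\<lambda>u. - t u) u = - DD cdim \<epsilon> t u"
  by (simp add: DD_def ext_def supp_def sum_negf)

lemma DD_diff_t: "fsupp t \<Longrightarrow> fsupp t' \<Longrightarrow> DD cdim \<epsilon> (\<lambda>u. t u - t' u) u = DD cdim \<epsilon> t u - DD cdim \<epsilon> t' u"
proof -
  assume a: "fsupp t" "fsupp t'"
  have "DD cdim \<epsilon> (\<lambda>u. t u - t' u) u = DD cdim \<epsilon> (\<lambda>u. t u + (- 1) * t' u) u" by simp
  also have "\<dots> = DD cdim \<epsilon> t u + DD cdim \<epsilon> (\<lambda>u. (- 1) * t' u) u"
    by (rule DD_add_t) (use a in \<open>auto intro: fsupp_scale fsupp_neg\<close>)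
  also have "\<dots> = DD cdim \<epsilon> t u - DD cdim \<epsilon> t' u" by (simp add: DD_neg_t)
  finally show ?thesis .
qed

lemma fsupp_diff: "fsupp a \<Longrightarrow> fsupp b \<Longrightarrow> fsupp (\<lambda>u. a u - b u)"
  unfolding fsupp_def by (rule finite_subset[of _ "{x. a x \<noteq> 0} \<union> {x. b x \<noteq> 0}"]) auto

lemma rmul_sumf: "rmul (\<lambda>u. \<Sum>f\<in>A. g f u) w u = (\<Sum>f\<in>A. rmul (g f) w u)"
proof (cases "\<exists>p. u = p @ w")
  case True then obtain p where "u = p @ w" by blast
  then show ?thesis by simp
next
  case False then show ?thesis by (simp add: rmul_other)
qed

lemma ext_fun_neg: "ext (\<lambda>v u. - F v u) t u = - ext F t u"
  by (simp add: ext_def sum_negf)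

lemma ext_fun_diff: "ext (\<lambda>v u. F v u - G v u) t u = ext F t u - ext G t u"
  by (simp add: ext_def sum_subtractf algebra_simps)

context CX
begin

definition tsup :: "'c set \<Rightarrow> nat \<Rightarrow> nat \<Rightarrow> ('c list \<Rightarrow> rat) \<Rightarrow> bool" where
  "tsup S k m z \<longleftrightarrow> fsupp z \<and> (\<forall>v. z v \<noteq> 0 \<longrightarrow> length v = k \<and> set v \<subseteq> S \<and> sum_list (map cdim v) = m)"

definition HD :: "'c set \<Rightarrow> ('c list \<Rightarrow> rat) \<Rightarrow> ('c \<Rightarrow> rat) \<Rightarrow> ('c \<Rightarrow> 'c list \<Rightarrow> rat) \<Rightarrow> bool" where
  "HD S z0 P H \<longleftrightarrow> fsupp z0 \<and> (\<exists>y0. z0 [y0] \<noteq> 0) \<and>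
     (\<forall>v. z0 v \<noteq> 0 \<longrightarrow> (\<exists>y. v = [y] \<and> y \<in> S \<and> cdim y = 0)) \<and>
     (\<forall>x\<in>S. fsupp (H x) \<and> (\<forall>v. H x v \<noteq> 0 \<longrightarrow> (\<exists>y. v = [y] \<and> y \<in> S \<and> cdim y = cdim x + 1)) \<and>
        (P x \<noteq> 0 \<longrightarrow> cdim x = 0) \<and>
        (\<forall>u. dd (H x) u + (\<Sum>f\<in>cl x. bd x f * H f u) = sing [x] u - P x * z0 u))"

lemma psign0: "cdim y = 0 \<Longrightarrow> psign cdim [y] = -1"
  by (simp add: psign_single)

lemma ext_zero_fun: "ext (\<lambda>v u. 0) t u = 0"
  by (simp add: ext_def)

lemma dd_lmul_z0:
  assumes z0s: "\<And>v. z0 v \<noteq> 0 \<Longrightarrow> \<exists>y. v = [y] \<and> cdim y = 0" and fz0: "fsupp z0" and fb: "fsupp b"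
  shows "dd (ext (\<lambda>v. lmul v b) z0) u = - ext (\<lambda>v. lmul v (dd b)) z0 u"
proof -
  have "dd (ext (\<lambda>v. lmul v b) z0) u = ext (\<lambda>v. dd (lmul v b)) z0 u"
    by (rule DD_ext[OF fz0]) (rule fsupp_lmul[OF fb])
  also have "\<dots> = ext (\<lambda>v u. (- 1) * lmul v (dd b) u) z0 u"
  proof (rule ext_fun_cong)
    fix v assume "z0 v \<noteq> 0"
    then obtain y where y: "v = [y]" "cdim y = 0" using z0s by blast
    have "dd (lmul v b) u = ext (\<lambda>v'. rmul (e1 y) v') b u + psign cdim [y] * lmul v (dd b) u"
      using DD_lmul[OF fb, of cdim e1 v u] y by simp
    also have "\<dots> = (- 1) * lmul v (dd b) u"
      using y by (simp add: e1_zero0 psign0 ext_zero_fun)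
    finally show "dd (lmul v b) u = (- 1) * lmul v (dd b) u" .
  qed
  also have "\<dots> = - ext (\<lambda>v. lmul v (dd b)) z0 u"
    by (simp add: ext_fun_neg)
  finally show ?thesis .
qed

lemma z0_cancel:
  assumes z0s: "\<And>v. z0 v \<noteq> 0 \<Longrightarrow> \<exists>y. v = [y]" and fz0: "fsupp z0" and y0: "z0 [y0] \<noteq> 0"
    and h: "\<And>u. ext (\<lambda>v. lmul v c) z0 u = 0"
  shows "c w = 0"
proof -
  have "ext (\<lambda>v. lmul v c) z0 (y0 # w) = (\<Sum>f\<in>{y0}. z0 [f] * lmul [f] c (y0 # w))"
  proof (rule ext_letters[OF fz0])
    fix v assume "z0 v \<noteq> 0" "lmul v c (y0 # w) \<noteq> 0"
    then obtain y where "v = [y]" using z0s by blast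
    moreover then have "y = y0" using \<open>lmul v c (y0 # w) \<noteq> 0\<close> lmul_nz by fastforce
    ultimately show "\<exists>f\<in>{y0}. v = [f]" by simp
  qed simp
  then have "z0 [y0] * c w = 0" using h[of "y0 # w"] lmul_app[of "[y0]" c w] by simp
  then show ?thesis using y0 by simp
qed

definition Kb :: "('c \<Rightarrow> 'c list \<Rightarrow> rat) \<Rightarrow> 'c list \<Rightarrow> 'c list \<Rightarrow> rat" where
  "Kb H v = (case v of [] \<Rightarrow> (\<lambda>_. 0) | x # w \<Rightarrow> rmul (H x) w)"

lemma Kb_Cons[simp]: "Kb H (x # w) = rmul (H x) w"
  by (simp add: Kb_def)

lemma K_word:
  assumes hd: "HD S z0 P H" and clo: "\<And>x. x \<in> S \<Longrightarrow> cl x \<subseteq> S" and x: "x \<in> S"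
  shows "dd (Kb H (x # w)) u + ext (Kb H) (Dw cdim e1 (x # w)) u = sing (x # w) u - P x * rmul z0 w u"
proof -
  have fHx: "fsupp (H x)" and Hxs: "\<And>v. H x v \<noteq> 0 \<Longrightarrow> \<exists>y. v = [y] \<and> y \<in> S \<and> cdim y = cdim x + 1"
    and Heq: "\<And>u. dd (H x) u + (\<Sum>f\<in>cl x. bd x f * H f u) = sing [x] u - P x * z0 u"
    using hd x by (auto simp: HD_def)
  have fw: "fsupp (Dw cdim e1 w)" by (rule fsupp_Dw) (rule fsupp_e1)
  let ?s = "psign cdim [x]"
  let ?M = "ext (\<lambda>v. lmul v (Dw cdim e1 w)) (H x) u"
  have A: "dd (Kb H (x # w)) u = rmul (dd (H x)) w u - ?s * ?M"
  proof -
    have "ext (\<lambda>v u. psign cdim v * lmul v (Dw cdim e1 w) u) (H x) u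
        = ext (\<lambda>v u. (- ?s) * lmul v (Dw cdim e1 w) u) (H x) u"
    proof (rule ext_fun_cong)
      fix v assume "H x v \<noteq> 0"
      then obtain y where "v = [y]" "cdim y = cdim x + 1" using Hxs by blast
      moreover have "even (cdim x + 1) = odd (cdim x)" by simp
      ultimately show "psign cdim v * lmul v (Dw cdim e1 w) u = (- ?s) * lmul v (Dw cdim e1 w) u"
        by (auto simp: psign_single)
    qed
    then show ?thesis by (simp add: DD_rmul[OF fHx] ext_fun_scale ext_fun_neg)
  qed
  have B1: "ext (Kb H) (rmul (e1 x) w) u = (\<Sum>f\<in>cl x. bd x f * rmul (H f) w u)"
  proof -
    have "ext (Kb H) (rmul (e1 x) w) u = ext (\<lambda>v. ext (Kb H) (sing (v @ w))) (e1 x) u"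
      unfolding rmul_as_ext[OF fsupp_e1] by (rule ext_ext[OF fsupp_e1]) simp
    also have "\<dots> = (\<Sum>f\<in>cl x. e1 x [f] * ext (Kb H) (sing ([f] @ w)) u)"
    proof (rule ext_letters[OF fsupp_e1 cl_fin])
      fix v assume "e1 x v \<noteq> 0"
      then show "\<exists>f\<in>cl x. v = [f]" using e1_nz bd_nz by blast
    qed
    also have "\<dots> = (\<Sum>f\<in>cl x. bd x f * rmul (H f) w u)"
      by (simp add: ext_sing e1_def)
    finally show ?thesis .
  qed
  have B2: "ext (Kb H) (lmul [x] (Dw cdim e1 w)) u = ?M"
  proof -
    have "ext (Kb H) (lmul [x] (Dw cdim e1 w)) u = ext (\<lambda>v. ext (Kb H) (sing ([x] @ v))) (Dw cdim e1 w) u"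
      unfolding lmul_as_ext[OF fw] by (rule ext_ext[OF fw]) simp
    also have "\<dots> = ext (\<lambda>v. rmul (H x) v) (Dw cdim e1 w) u"
      by (simp add: ext_sing)
    also have "\<dots> = ?M" by (rule mul_comm_ext[OF fHx fw, symmetric])
    finally show ?thesis .
  qed
  have B: "ext (Kb H) (Dw cdim e1 (x # w)) u = (\<Sum>f\<in>cl x. bd x f * rmul (H f) w u) + ?s * ?M"
  proof -
    have "ext (Kb H) (Dw cdim e1 (x # w)) u = ext (Kb H) (rmul (e1 x) w) u + ext (Kb H) (\<lambda>u. ?s * lmul [x] (Dw cdim e1 w) u) u"
      unfolding Dw.simps by (rule ext_add) (auto intro!: fsupp_rmul fsupp_e1 fsupp_scale fsupp_lmul fw)
    then show ?thesis by (simp add: B1 B2 ext_scale)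
  qed
  have "dd (Kb H (x # w)) u + ext (Kb H) (Dw cdim e1 (x # w)) u
      = rmul (dd (H x)) w u + (\<Sum>f\<in>cl x. bd x f * rmul (H f) w u)"
    by (simp only: A B)
  also have "\<dots> = rmul (\<lambda>u. dd (H x) u + (\<Sum>f\<in>cl x. bd x f * H f u)) w u"
    by (simp add: rmul_add rmul_sumf rmul_scale)
  also have "\<dots> = rmul (\<lambda>u. sing [x] u - P x * z0 u) w u"
    by (simp add: Heq)
  also have "\<dots> = sing (x # w) u - P x * rmul z0 w u"
    using rmul_add[of "sing [x]" "\<lambda>u. - P x * z0 u" w] rmul_scale[of "- P x" z0 w] rmul_sing[of "[x]" w]
    by simp
  finally show ?thesis .
qed

end

context CX
begin

lemma acyc:
  assumes hd: "HD S z0 P H" and clo: "\<And>x. x \<in> S \<Longrightarrow> cl x \<subseteq> S"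
  shows "tsup S k m z \<Longrightarrow> 1 \<le> m \<Longrightarrow> (\<forall>u. dd z u = 0) \<Longrightarrow> \<exists>y. tsup S k (Suc m) y \<and> (\<forall>u. dd y u = z u)"
proof (induction k arbitrary: m z)
  case 0
  have "z = (\<lambda>_. 0)"
  proof (rule ext, rule ccontr)
    fix v assume "z v \<noteq> 0"
    with 0 show False by (auto simp: tsup_def)
  qed
  then show ?case by (intro exI[of _ "\<lambda>_. 0"]) (auto simp: tsup_def)
next
  case (Suc k m z)
  have fz0: "fsupp z0" and y0ex: "\<exists>y0. z0 [y0] \<noteq> 0"
    and z0s: "\<And>v. z0 v \<noteq> 0 \<Longrightarrow> \<exists>y. v = [y] \<and> y \<in> S \<and> cdim y = 0"
    and fH: "\<And>x. x \<in> S \<Longrightarrow> fsupp (H x)"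
    and Hs: "\<And>x v. x \<in> S \<Longrightarrow> H x v \<noteq> 0 \<Longrightarrow> \<exists>y. v = [y] \<and> y \<in> S \<and> cdim y = cdim x + 1"
    and Pz: "\<And>x. x \<in> S \<Longrightarrow> P x \<noteq> 0 \<Longrightarrow> cdim x = 0"
    using hd unfolding HD_def by blast+
  obtain y0 where y0: "z0 [y0] \<noteq> 0" using y0ex by blast
  have fz: "fsupp z" and zs: "\<And>v. z v \<noteq> 0 \<Longrightarrow> length v = Suc k \<and> set v \<subseteq> S \<and> sum_list (map cdim v) = m"
    using Suc.prems by (auto simp: tsup_def)
  have dz0: "dd z = (\<lambda>_. 0)" using Suc.prems by auto
  have zcons: "\<And>v. z v \<noteq> 0 \<Longrightarrow> \<exists>x w. v = x # w \<and> x \<in> S \<and> set w \<subseteq> S" 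
    using zs by (metis Suc_length_conv insert_subset list.simps(15))
  define z' where "z' = ext (\<lambda>v u. P (hd v) * sing (tl v) u) z"
  define Y0 where "Y0 = ext (\<lambda>v. lmul v z') z0"
  define Kz where "Kz = ext (Kb H) z"
  have fKb: "\<And>v. z v \<noteq> 0 \<Longrightarrow> fsupp (Kb H v)"
    using zcons fH by (fastforce intro: fsupp_rmul)
  have fKz: "fsupp Kz" unfolding Kz_def by (rule fsupp_ext[OF fz fKb])
  have fz': "fsupp z'" unfolding z'_def by (rule fsupp_ext[OF fz]) (auto intro: fsupp_scale)
  have fY0: "fsupp Y0" unfolding Y0_def by (rule fsupp_ext[OF fz0]) (auto intro: fsupp_lmul fz')
  have fDw: "\<And>v. fsupp (Dw cdim e1 v)" by (rule fsupp_Dw) (rule fsupp_e1)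
  have key1: "dd Kz u = z u - Y0 u" for u
  proof -
    have "dd Kz u = ext (\<lambda>v. dd (Kb H v)) z u"
      unfolding Kz_def by (rule DD_ext[OF fz fKb])
    moreover have "ext (\<lambda>v. ext (Kb H) (Dw cdim e1 v)) z u = 0"
    proof -
      have "ext (\<lambda>v. ext (Kb H) (Dw cdim e1 v)) z u = ext (Kb H) (dd z) u"
        unfolding DD_def[of cdim e1 z] by (rule ext_ext[OF fz fDw, symmetric])
      then show ?thesis by (simp add: dz0)
    qed
    ultimately have "dd Kz u = ext (\<lambda>v u. dd (Kb H v) u + ext (Kb H) (Dw cdim e1 v) u) z u"
      by (simp add: ext_fun_add)
    also have "\<dots> = ext (\<lambda>v u. sing v u - P (hd v) * rmul z0 (tl v) u) z u"
    proof (rule ext_fun_cong)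
      fix v assume "z v \<noteq> 0"
      then obtain x w where v: "v = x # w" "x \<in> S" using zcons by blast
      show "dd (Kb H v) u + ext (Kb H) (Dw cdim e1 v) u = sing v u - P (hd v) * rmul z0 (tl v) u"
        using K_word[OF hd clo v(2)] v(1) by simp
    qed
    also have "\<dots> = ext sing z u - ext (\<lambda>v u. P (hd v) * rmul z0 (tl v) u) z u"
      by (rule ext_fun_diff)
    also have "ext (\<lambda>v u. P (hd v) * rmul z0 (tl v) u) z u = Y0 u"
    proof -
      have "Y0 u = ext (\<lambda>v. rmul z0 v) z' u" unfolding Y0_def by (rule mul_comm_ext[OF fz0 fz'])
      also have "\<dots> = ext (\<lambda>v. ext (\<lambda>w. rmul z0 w) (\<lambda>u. P (hd v) * sing (tl v) u)) z u"
        unfolding z'_def by (rule ext_ext[OF fz]) (auto intro: fsupp_scale)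
      also have "\<dots> = ext (\<lambda>v u. P (hd v) * rmul z0 (tl v) u) z u"
        by (rule ext_fun_cong) (simp add: ext_scale ext_sing)
      finally show ?thesis by simp
    qed
    finally show ?thesis by (simp add: ext_sing_fun[OF fz])
  qed
  have Y0eq: "Y0 = (\<lambda>u. z u - dd Kz u)" using key1 by (auto intro!: ext)
  have key2: "dd Y0 u = 0" for u
  proof -
    have "dd Y0 u = dd z u - dd (dd Kz) u"
      unfolding Y0eq by (rule DD_diff_t[OF fz fsupp_DD[OF fKz fsupp_e1]])
    then show ?thesis by (simp add: dz0 dd_dd[OF fKz])
  qed
  have z0s': "\<And>v. z0 v \<noteq> 0 \<Longrightarrow> \<exists>y. v = [y] \<and> cdim y = 0" using z0s by blast
  have key3: "dd z' w = 0" for w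
  proof (rule z0_cancel[OF _ fz0 y0])
    show "\<And>v. z0 v \<noteq> 0 \<Longrightarrow> \<exists>y. v = [y]" using z0s by blast
    fix u
    show "ext (\<lambda>v. lmul v (dd z')) z0 u = 0"
      using key2[of u] dd_lmul_z0[OF z0s' fz0 fz', of u] by (simp add: Y0_def)
  qed
  have tz': "tsup S k m z'"
  proof -
    have "length w = k \<and> set w \<subseteq> S \<and> sum_list (map cdim w) = m" if "z' w \<noteq> 0" for w
    proof -
    from that obtain v where v: "z v \<noteq> 0" "P (hd v) * sing (tl v) w \<noteq> 0"
      unfolding z'_def by (auto dest!: ext_nz)
    then obtain x w' where xw: "v = x # w'" "x \<in> S" using zcons by blast
    then have "w' = w" "P x \<noteq> 0" using v by (auto simp: sing_def split: if_splits)
    then have "cdim x = 0" using Pz xw by blast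
    then show "length w = k \<and> set w \<subseteq> S \<and> sum_list (map cdim w) = m"
      using zs[OF v(1)] xw \<open>w' = w\<close> by auto
    qed
    then show ?thesis using fz' by (auto simp: tsup_def)
  qed
  obtain y' where y': "tsup S k (Suc m) y'" "\<And>u. dd y' u = z' u"
    using Suc.IH[OF tz' Suc.prems(2)] key3 by blast
  have fy': "fsupp y'" using y' by (simp add: tsup_def)
  define Y where "Y = ext (\<lambda>v. lmul v y') z0"
  have fY: "fsupp Y" unfolding Y_def by (rule fsupp_ext[OF fz0]) (auto intro: fsupp_lmul fy')
  have dY: "dd Y u = - Y0 u" for u
  proof -
    have "dd y' = z'" using y'(2) by (auto intro!: ext)
    then show ?thesis unfolding Y_def Y0_def by (simp add: dd_lmul_z0[OF z0s' fz0 fy'])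
  qed
  define y where "y = (\<lambda>u. Kz u - Y u)"
  have dy: "dd y u = z u" for u
    unfolding y_def by (simp add: DD_diff_t[OF fKz fY] key1 dY)
  have ty: "tsup S (Suc k) (Suc m) y"
  proof -
    have fy: "fsupp y" unfolding y_def by (rule fsupp_diff[OF fKz fY])
    have "length u = Suc k \<and> set u \<subseteq> S \<and> sum_list (map cdim u) = Suc m" if "y u \<noteq> 0" for u
    proof -
    from that have "Kz u \<noteq> 0 \<or> Y u \<noteq> 0" unfolding y_def by auto
    then show "length u = Suc k \<and> set u \<subseteq> S \<and> sum_list (map cdim u) = Suc m"
    proof
      assume "Kz u \<noteq> 0"
      then obtain v where v: "z v \<noteq> 0" "Kb H v u \<noteq> 0" unfolding Kz_def by (auto dest!: ext_nz)
      then obtain x w where xw: "v = x # w" "x \<in> S" using zcons by blast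
      then obtain p where p: "u = p @ w" "H x p \<noteq> 0" using v(2) rmul_nz by fastforce
      then obtain y1 where "p = [y1]" "y1 \<in> S" "cdim y1 = cdim x + 1" using Hs xw(2) by blast
      then show ?thesis using zs[OF v(1)] xw p by auto
    next
      assume "Y u \<noteq> 0"
      then obtain v where v: "z0 v \<noteq> 0" "lmul v y' u \<noteq> 0" unfolding Y_def by (auto dest!: ext_nz)
      then obtain y1 where y1: "v = [y1]" "y1 \<in> S" "cdim y1 = 0" using z0s by blast
      then obtain s where s: "u = [y1] @ s" "y' s \<noteq> 0" using v(2) lmul_nz by blast
      then show ?thesis using y'(1) y1 by (auto simp: tsup_def)
    qed
    qed
    then show ?thesis using fy by (auto simp: tsup_def)
  qed
  show ?case using ty dy by blast
qed

end

primrec dimrec :: "('c \<Rightarrow> nat) \<Rightarrow> (('c \<Rightarrow> 'a) \<Rightarrow> 'c \<Rightarrow> 'a \<Rightarrow> bool) \<Rightarrow> nat \<Rightarrow> 'c \<Rightarrow> 'a" where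
  "dimrec dm Q 0 = (\<lambda>c. undefined)"
| "dimrec dm Q (Suc n) = (\<lambda>c. if dm c = n then (SOME y. Q (dimrec dm Q n) c y) else dimrec dm Q n c)"

lemma dimrec_stab: "dm c < n \<Longrightarrow> n \<le> m \<Longrightarrow> dimrec dm Q m c = dimrec dm Q n c"
proof (induction m)
  case 0 then show ?case by simp
next
  case (Suc m)
  show ?case
  proof (cases "n = Suc m")
    case False
    then have "n \<le> m" using Suc by simp
    then show ?thesis using Suc by simp
  qed simp
qed

lemma build_by_dim:
  fixes dm :: "'c \<Rightarrow> nat"
  assumes loc: "\<And>G G' c y. (\<And>f. dm f < dm c \<Longrightarrow> G f = G' f) \<Longrightarrow> Q G c y \<Longrightarrow> Q G' c y"
    and ex: "\<And>G c. (\<And>f. dm f < dm c \<Longrightarrow> Q G f (G f)) \<Longrightarrow> \<exists>y. Q G c y"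
  shows "\<exists>G. \<forall>c. Q G c (G c)"
proof -
  let ?G = "dimrec dm Q"
  have inv: "\<forall>c. dm c < n \<longrightarrow> Q (?G n) c (?G n c)" for n
  proof (induction n)
    case 0 then show ?case by simp
  next
    case (Suc n)
    show ?case
    proof (intro allI impI)
      fix c assume c: "dm c < Suc n"
      have agree: "\<And>f. dm f < dm c \<Longrightarrow> ?G n f = ?G (Suc n) f" using c by simp
      show "Q (?G (Suc n)) c (?G (Suc n) c)"
      proof (cases "dm c = n")
        case True
        have "\<exists>y. Q (?G n) c y" by (rule ex) (use Suc.IH True in blast)
        then have "Q (?G n) c (SOME y. Q (?G n) c y)" by (rule someI_ex)
        then have q: "Q (?G n) c (?G (Suc n) c)" using True by simp
        show ?thesis by (rule loc[where G = "?G n" and G' = "?G (Suc n)", OF agree q])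
      next
        case False
        then have "dm c < n" using c by simp
        then have q2: "Q (?G n) c (?G n c)" using Suc.IH by blast
        have "Q (?G (Suc n)) c (?G n c)" by (rule loc[where G = "?G n" and G' = "?G (Suc n)", OF agree q2])
        then show ?thesis using False by simp
      qed
    qed
  qed
  define G where "G = (\<lambda>c. ?G (Suc (dm c)) c)"
  have "Q G c (G c)" for c
  proof -
    have "Q (?G (Suc (dm c))) c (G c)" using inv[of "Suc (dm c)"] unfolding G_def by blast
    moreover have "\<And>f. dm f < dm c \<Longrightarrow> ?G (Suc (dm c)) f = G f"
      unfolding G_def by (rule dimrec_stab) auto
    ultimately show ?thesis by (rule loc[rotated])
  qed
  then show ?thesis by blast
qed

lemma chain_bd_scale: "chain_bd bd (\<lambda>x. a * z x) f = a * chain_bd bd z f"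
proof (cases "a = 0")
  case True then show ?thesis by (simp add: chain_bd_def)
next
  case False
  then have "{e. a * z e \<noteq> 0} = {e. z e \<noteq> 0}" by auto
  then show ?thesis by (simp add: chain_bd_def sum_distrib_left mult.assoc)
qed

lemma sing_emb: "sing [c] = emb (\<lambda>x. if x = c then 1 else 0)"
  by (rule ext) (auto simp: sing_def emb_def length_Suc_conv)

lemma emb_lin: "emb (\<lambda>x. a x + q * b x) v = emb a v + q * emb b v"
  by (simp add: emb_def)

context CX
begin

lemma chain_of_tc:
  assumes "fsupp r" "\<And>v. r v \<noteq> 0 \<Longrightarrow> \<exists>y. v = [y] \<and> y \<in> S \<and> cdim y = n"
  shows "(\<lambda>x. r [x]) \<in> chains_in cdim S n" "emb (\<lambda>x. r [x]) = r"
proof -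
  have "{x. r [x] \<noteq> 0} = (\<lambda>x. [x]) -` {v. r v \<noteq> 0}" by auto
  then have "finite {x. r [x] \<noteq> 0}" using assms(1) unfolding fsupp_def
    by (metis finite_vimageI inj_def list.inject)
  then show "(\<lambda>x. r [x]) \<in> chains_in cdim S n"
    using assms(2) by (auto simp: chains_in_def fsupp_def supported_in_def homogeneous_def)
  show "emb (\<lambda>x. r [x]) = r"
  proof (rule ext)
    fix v show "emb (\<lambda>x. r [x]) v = r v"
    proof (cases "length v = 1")
      case True then obtain x where "v = [x]" by (metis One_nat_def length_0_conv length_Suc_conv)
      then show ?thesis by simp
    next
      case False
      have "r v = 0"
      proof (rule ccontr)
        assume "r v \<noteq> 0" then obtain y where "v = [y]" using assms(2) by blast
        then show False using False by simp
      qed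
      then show ?thesis using False by (simp add: emb_def)
    qed
  qed
qed

lemma emb_chain:
  assumes "z \<in> chains_in cdim S n"
  shows "fsupp (emb z)" "\<And>v. emb z v \<noteq> 0 \<Longrightarrow> \<exists>y. v = [y] \<and> y \<in> S \<and> cdim y = n"
  using assms by (auto simp: chains_in_def supported_in_def homogeneous_def intro: fsupp_emb dest!: emb_nz)

lemma HD_exists:
  assumes rh: "rat_homology_of_point cdim bd S" and clo: "\<And>x. x \<in> S \<Longrightarrow> cl x \<subseteq> S"
  shows "\<exists>z0 P H. HD S z0 P H"
proof -
  have pos: "\<And>n z. n > 0 \<Longrightarrow> z \<in> chains_in cdim S n \<Longrightarrow> chain_bd bd z = (\<lambda>_. 0) \<Longrightarrow>
      \<exists>y\<in>chains_in cdim S (n+1). chain_bd bd y = z"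
    using rh unfolding rat_homology_of_point_def by blast
  obtain z0c where z0c: "z0c \<in> chains_in cdim S 0"
    and nb: "\<nexists>y. y \<in> chains_in cdim S 1 \<and> chain_bd bd y = z0c"
    and sp: "\<And>z. z \<in> chains_in cdim S 0 \<Longrightarrow> \<exists>q. \<exists>y\<in>chains_in cdim S 1. z = (\<lambda>c. q * z0c c + chain_bd bd y c)"
    using rh unfolding rat_homology_of_point_def by blast
  define z0 where "z0 = emb z0c"
  have fz0: "fsupp z0" and z0s: "\<And>v. z0 v \<noteq> 0 \<Longrightarrow> \<exists>y. v = [y] \<and> y \<in> S \<and> cdim y = 0"
    using emb_chain[OF z0c] by (auto simp: z0_def)
  have fzc: "fsupp z0c" using z0c by (simp add: chains_in_def)
  have z0nz: "\<exists>y0. z0 [y0] \<noteq> 0"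
  proof (rule ccontr)
    assume "\<not> (\<exists>y0. z0 [y0] \<noteq> 0)"
    then have "z0c = (\<lambda>_. 0)" by (auto simp: z0_def)
    moreover have "(\<lambda>_. 0) \<in> chains_in cdim S 1"
      by (simp add: chains_in_def supported_in_def homogeneous_def)
    moreover have "chain_bd bd (\<lambda>_. 0) = (\<lambda>_. 0)" by (simp add: chain_bd_def)
    ultimately show False using nb by metis
  qed
  define Q where "Q = (\<lambda>(G :: 'c \<Rightarrow> rat \<times> ('c list \<Rightarrow> rat)) c (y :: rat \<times> ('c list \<Rightarrow> rat)).
     c \<in> S \<longrightarrow> ((fst y \<noteq> 0 \<longrightarrow> cdim c = 0) \<and> fsupp (snd y) \<and>
       (\<forall>v. snd y v \<noteq> 0 \<longrightarrow> (\<exists>y'. v = [y'] \<and> y' \<in> S \<and> cdim y' = cdim c + 1)) \<and>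
       (\<forall>u. dd (snd y) u + (\<Sum>f\<in>cl c. bd c f * snd (G f) u) = sing [c] u - fst y * z0 u)))"
  have loc: "Q G' c y" if agree: "\<And>f. cdim f < cdim c \<Longrightarrow> G f = G' f" and q: "Q G c y" for G G' c y
  proof -
    have "(\<Sum>f\<in>cl c. bd c f * snd (G f) u) = (\<Sum>f\<in>cl c. bd c f * snd (G' f) u)" for u
    proof (rule sum.cong[OF refl])
      fix f assume "f \<in> cl c"
      show "bd c f * snd (G f) u = bd c f * snd (G' f) u"
      proof (cases "bd c f = 0")
        case False
        then have "cdim f < cdim c" using bd_nz by fastforce
        then show ?thesis using agree by simp
      qed simp
    qed
    then show ?thesis using q by (simp add: Q_def)
  qed
  have ex: "\<exists>y. Q G c y" if IH: "\<And>f. cdim f < cdim c \<Longrightarrow> Q G f (G f)" for G c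
  proof (cases "c \<in> S")
    case False then show ?thesis by (simp add: Q_def)
  next
    case cS: True
    show ?thesis
    proof (cases "cdim c")
      case 0
      define ind where "ind = (\<lambda>x. if x = c then (1::rat) else 0)"
      have "ind \<in> chains_in cdim S 0"
        using cS 0 by (auto simp: ind_def chains_in_def fsupp_def supported_in_def homogeneous_def)
      then obtain q yc where yc: "yc \<in> chains_in cdim S 1" and ind: "ind = (\<lambda>x. q * z0c x + chain_bd bd yc x)"
        using sp by blast
      have fyc: "fsupp yc" using yc by (simp add: chains_in_def)
      have "Q G c (q, emb yc)"
        unfolding Q_def
      proof (intro impI, simp only: fst_conv snd_conv, intro conjI allI impI)
        show "q \<noteq> 0 \<Longrightarrow> cdim c = 0" using 0 by simp
        show "fsupp (emb yc)" by (rule emb_chain(1)[OF yc])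
        fix v assume "emb yc v \<noteq> 0"
        then show "\<exists>y'. v = [y'] \<and> y' \<in> S \<and> cdim y' = cdim c + 1" using emb_chain(2)[OF yc] 0 by simp
      next
        fix u
        have "dd (emb yc) u = emb (chain_bd bd yc) u" by (simp add: dd_emb[OF fyc])
        also have "\<dots> = emb ind u - q * emb z0c u"
          unfolding ind by (simp add: emb_def)
        finally show "dd (emb yc) u + (\<Sum>f\<in>cl c. bd c f * snd (G f) u) = sing [c] u - q * z0 u"
          using 0 by (simp add: bd0 sing_emb ind_def z0_def)
      qed
      then show ?thesis by blast
    next
      case (Suc n)
      have fG: "fsupp (snd (G f))" and Gs: "\<And>v. snd (G f) v \<noteq> 0 \<Longrightarrow> \<exists>y'. v = [y'] \<and> y' \<in> S \<and> cdim y' = cdim f + 1"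
        and Geq: "\<And>u. dd (snd (G f)) u + (\<Sum>g\<in>cl f. bd f g * snd (G g) u) = sing [f] u - fst (G f) * z0 u"
        and GP: "fst (G f) \<noteq> 0 \<Longrightarrow> cdim f = 0"
        if "bd c f \<noteq> 0" for f
      proof -
        have f: "f \<in> cl c" "cdim f + 1 = cdim c" using bd_nz[OF that] by auto
        then have "f \<in> S" "cdim f < cdim c" using clo[OF cS] by auto
        then have "Q G f (G f)" using IH by blast
        then show "fsupp (snd (G f))" "\<And>v. snd (G f) v \<noteq> 0 \<Longrightarrow> \<exists>y'. v = [y'] \<and> y' \<in> S \<and> cdim y' = cdim f + 1"
          "\<And>u. dd (snd (G f)) u + (\<Sum>g\<in>cl f. bd f g * snd (G g) u) = sing [f] u - fst (G f) * z0 u"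
          "fst (G f) \<noteq> 0 \<Longrightarrow> cdim f = 0"
          using \<open>f \<in> S\<close> unfolding Q_def by auto
      qed
      define B where "B = (\<lambda>u. \<Sum>f\<in>cl c. bd c f * snd (G f) u)"
      define r where "r = (\<lambda>u. sing [c] u - B u)"
      have fGs: "\<And>f. fsupp (\<lambda>u. bd c f * snd (G f) u)"
        by (case_tac "bd c f = 0") (auto intro: fsupp_scale fG)
      have fB: "fsupp B" unfolding B_def
        by (rule fsupp_sum[OF cl_fin fGs])
      have fr: "fsupp r" unfolding r_def by (rule fsupp_diff[OF fsupp_sing fB])
      have rs: "\<exists>y. v = [y] \<and> y \<in> S \<and> cdim y = Suc n" if "r v \<noteq> 0" for v
      proof (cases "sing [c] v \<noteq> 0")
        case True then show ?thesis using cS Suc by (auto simp: sing_def split: if_splits)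
      next
        case False
        then have "B v \<noteq> 0" using that by (simp add: r_def)
        then obtain f where f: "f \<in> cl c" "bd c f * snd (G f) v \<noteq> 0" unfolding B_def
          by (meson sum.not_neutral_contains_not_neutral)
        then have "bd c f \<noteq> 0" "snd (G f) v \<noteq> 0" by auto
        then show ?thesis using Gs[of f v] bd_nz[of c f] Suc by auto
      qed
      define lam where "lam = (\<Sum>f\<in>cl c. bd c f * fst (G f))"
      have dr: "dd r u = lam * z0 u" for u
      proof -
        have "dd r u = dd (sing [c]) u - dd B u" unfolding r_def by (rule DD_diff_t[OF fsupp_sing fB])
        also have "dd (sing [c]) u = (\<Sum>f\<in>cl c. bd c f * sing [f] u)"
          by (simp add: DD_sing e1_sum)
        also have "dd B u = (\<Sum>f\<in>cl c. bd c f * dd (snd (G f)) u)"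
          unfolding B_def by (simp add: DD_sum_t[OF cl_fin fGs] DD_scale_t)
        also have "\<dots> = (\<Sum>f\<in>cl c. bd c f * (sing [f] u - fst (G f) * z0 u - (\<Sum>g\<in>cl f. bd f g * snd (G g) u)))"
        proof (rule sum.cong[OF refl])
          fix f assume "f \<in> cl c"
          show "bd c f * dd (snd (G f)) u = bd c f * (sing [f] u - fst (G f) * z0 u - (\<Sum>g\<in>cl f. bd f g * snd (G g) u))"
          proof (cases "bd c f = 0")
            case False
            have "dd (snd (G f)) u = sing [f] u - fst (G f) * z0 u - (\<Sum>g\<in>cl f. bd f g * snd (G g) u)"
              using Geq[OF False, of u] by linarith
            then show ?thesis by simp
          qed simp
        qed
        also have "\<dots> = (\<Sum>f\<in>cl c. bd c f * sing [f] u - (bd c f * fst (G f)) * z0 u - bd c f * (\<Sum>g\<in>cl f. bd f g * snd (G g) u))"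
          by (simp only: right_diff_distrib mult.assoc)
        also have "\<dots> = (\<Sum>f\<in>cl c. bd c f * sing [f] u) - (\<Sum>f\<in>cl c. (bd c f * fst (G f)) * z0 u) - (\<Sum>f\<in>cl c. bd c f * (\<Sum>g\<in>cl f. bd f g * snd (G g) u))"
          by (simp only: sum_subtractf)
        also have "(\<Sum>f\<in>cl c. (bd c f * fst (G f)) * z0 u) = lam * z0 u"
          by (simp only: lam_def sum_distrib_right)
        finally show ?thesis by (simp add: bdbd_gen)
      qed
      have rc: "(\<lambda>x. r [x]) \<in> chains_in cdim S (Suc n)" "emb (\<lambda>x. r [x]) = r"
        using chain_of_tc[OF fr rs] by auto
      have frc: "fsupp (\<lambda>x. r [x])" using rc(1) by (simp add: chains_in_def)
      have cb: "chain_bd bd (\<lambda>x. r [x]) x = lam * z0c x" for x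
      proof -
        have "emb (chain_bd bd (\<lambda>x. r [x])) [x] = dd r [x]"
          using dd_emb[OF frc] rc(2) by simp
        then show ?thesis using dr[of "[x]"] by (simp add: z0_def)
      qed
      have lam0: "lam = 0"
      proof (rule ccontr)
        assume lnz: "lam \<noteq> 0"
        have "n = 0"
        proof (rule ccontr)
          assume "n \<noteq> 0"
          have "lam = (\<Sum>f\<in>cl c. 0)" unfolding lam_def
          proof (rule sum.cong[OF refl])
            fix f assume "f \<in> cl c"
            show "bd c f * fst (G f) = 0"
            proof (cases "bd c f = 0")
              case False
              then have "cdim f = n" using bd_nz Suc by fastforce
              then have "fst (G f) = 0" using GP[OF False] \<open>n \<noteq> 0\<close> by auto
              then show ?thesis by simp
            qed simp
          qed
          then show False using lnz by simp
        qed
        define yc where "yc = (\<lambda>x. (1 / lam) * r [x])"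
        have "yc \<in> chains_in cdim S 1" using rc(1) \<open>n = 0\<close>
          by (auto simp: yc_def chains_in_def fsupp_def supported_in_def homogeneous_def)
        moreover have "chain_bd bd yc = z0c"
        proof (rule ext)
          fix x
          have "chain_bd bd yc x = (1 / lam) * chain_bd bd (\<lambda>x. r [x]) x"
            unfolding yc_def by (rule chain_bd_scale)
          then show "chain_bd bd yc x = z0c x" using lnz by (simp add: cb)
        qed
        ultimately show False using nb by blast
      qed
      have "chain_bd bd (\<lambda>x. r [x]) = (\<lambda>_. 0)" by (rule ext) (simp add: cb lam0)
      then obtain yc where yc: "yc \<in> chains_in cdim S (Suc n + 1)" "chain_bd bd yc = (\<lambda>x. r [x])"
        using pos[OF _ rc(1)] by blast
      have fyc: "fsupp yc" using yc by (simp add: chains_in_def)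
      have "Q G c (0, emb yc)"
        unfolding Q_def
      proof (intro impI, simp only: fst_conv snd_conv, intro conjI allI impI)
        show "fsupp (emb yc)" by (rule emb_chain(1)[OF yc(1)])
        fix v assume "emb yc v \<noteq> 0"
        then show "\<exists>y'. v = [y'] \<and> y' \<in> S \<and> cdim y' = cdim c + 1" using emb_chain(2)[OF yc(1)] Suc by simp
      next
        fix u
        have "dd (emb yc) u = r u" using dd_emb[OF fyc] yc(2) rc(2) by simp
        then show "dd (emb yc) u + (\<Sum>f\<in>cl c. bd c f * snd (G f) u) = sing [c] u - 0 * z0 u"
          by (simp add: r_def B_def)
      qed simp
      then show ?thesis by blast
    qed
  qed
  have "\<exists>G. \<forall>c. Q G c (G c)"
  proof (rule build_by_dim[of cdim Q])
    fix G G' c y assume "\<And>f. cdim f < cdim c \<Longrightarrow> G f = G' f" "Q G c y" then show "Q G' c y" by (rule loc)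
  next
    fix G c assume "\<And>f. cdim f < cdim c \<Longrightarrow> Q G f (G f)" then show "\<exists>y. Q G c y" by (rule ex)
  qed
  then obtain G where G: "\<And>c. Q G c (G c)" by blast
  have "HD S z0 (\<lambda>x. fst (G x)) (\<lambda>x. snd (G x))"
    unfolding HD_def using fz0 z0nz z0s G by (auto simp: Q_def)
  then show ?thesis by blast
qed

end

definition trunc :: "nat \<Rightarrow> ('c \<Rightarrow> 'c list \<Rightarrow> rat) \<Rightarrow> 'c \<Rightarrow> 'c list \<Rightarrow> rat" where
  "trunc N \<epsilon> = (\<lambda>c w. if length w \<le> N then \<epsilon> c w else 0)"

definition sd :: "('c \<Rightarrow> nat) \<Rightarrow> 'c list \<Rightarrow> int" where
  "sd cdim v = int (sum_list (map cdim v)) - int (length v)"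

lemma sd_append[simp]: "sd cdim (a @ b) = sd cdim a + sd cdim b"
  by (simp add: sd_def)
lemma sd_Cons: "sd cdim (x # b) = int (cdim x) - 1 + sd cdim b"
  by (simp add: sd_def)

lemma sum_if_eq: "finite A \<Longrightarrow> (\<And>y. y \<notin> A \<Longrightarrow> g y = 0) \<Longrightarrow> (\<Sum>y\<in>A. if y = b then g y else 0) = g b"
  by (cases "b \<in> A") (auto intro!: sum.neutral simp: sum_single[of A b])

lemma ext_12:
  assumes "fsupp t" "finite A"
    and "\<And>v. t v \<noteq> 0 \<Longrightarrow> (\<exists>f\<in>A. v = [f]) \<or> (\<exists>x\<in>A. \<exists>y\<in>A. v = [x, y])"
  shows "ext G t u = (\<Sum>f\<in>A. t [f] * G [f] u) + (\<Sum>x\<in>A. \<Sum>y\<in>A. t [x, y] * G [x, y] u)"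
proof -
  let ?I1 = "(\<lambda>f. [f]) ` A" and ?I2 = "(\<lambda>(x, y). [x, y]) ` (A \<times> A)"
  have fin: "finite (?I1 \<union> ?I2)" using assms(2) by auto
  have "ext G t u = (\<Sum>v\<in>?I1 \<union> ?I2. t v * G v u)"
    by (rule ext_eq[OF fin]) (use assms(3) in \<open>force simp: supp_def\<close>)
  also have "\<dots> = (\<Sum>v\<in>?I1. t v * G v u) + (\<Sum>v\<in>?I2. t v * G v u)"
    by (rule sum.union_disjoint) (use assms(2) in auto)
  also have "(\<Sum>v\<in>?I1. t v * G v u) = (\<Sum>f\<in>A. t [f] * G [f] u)"
    by (subst sum.reindex) (auto simp: inj_on_def)
  also have "(\<Sum>v\<in>?I2. t v * G v u) = (\<Sum>p\<in>A \<times> A. t [fst p, snd p] * G [fst p, snd p] u)"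
    by (subst sum.reindex) (auto simp: inj_on_def case_prod_beta intro!: sum.cong)
  also have "\<dots> = (\<Sum>x\<in>A. \<Sum>y\<in>A. t [x, y] * G [x, y] u)"
    by (simp add: sum.cartesian_product case_prod_beta)
  finally show ?thesis .
qed

locale MAIN = CX cdim bd cl
  for cdim :: "'c \<Rightarrow> nat" and bd :: "'c \<Rightarrow> 'c \<Rightarrow> rat" and cl :: "'c \<Rightarrow> 'c set" +
  fixes \<Delta> :: "'c \<Rightarrow> 'c \<Rightarrow> 'c \<Rightarrow> rat"
  assumes acyc_h: "\<forall>e. rat_homology_of_point cdim bd (cl e)"
    and loc2: "\<forall>e a b. \<Delta> e a b \<noteq> 0 \<longrightarrow> a \<in> cl e \<and> b \<in> cl e"
    and deg2: "\<forall>e a b. \<Delta> e a b \<noteq> 0 \<longrightarrow> cdim a + cdim b = cdim e"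
    and chain_map: "\<forall>e a b. (\<Sum>f\<in>cl e. bd e f * \<Delta> f a b) =
          (\<Sum>x\<in>cl e. \<Delta> e x b * bd x a) + (\<Sum>y\<in>cl e. (-1) ^ cdim a * \<Delta> e a y * bd y b)"
begin

definition TD :: "(nat \<Rightarrow> 'c \<Rightarrow> 'c list \<Rightarrow> rat) \<Rightarrow> 'c \<Rightarrow> 'c list \<Rightarrow> rat" where
  "TD \<delta> = total_delta cdim bd \<Delta> \<delta>"

definition goodk :: "nat \<Rightarrow> ('c \<Rightarrow> 'c list \<Rightarrow> rat) \<Rightarrow> bool" where
  "goodk k g \<longleftrightarrow> local_map cl g \<and> (\<forall>e w. cdim e = 0 \<longrightarrow> g e w = 0) \<and>
     (\<forall>e w. g e w \<noteq> 0 \<longrightarrow> length w = k \<and> sum_list (map cdim w) + 2 = cdim e + k)"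

definition GoodFam :: "(nat \<Rightarrow> 'c \<Rightarrow> 'c list \<Rightarrow> rat) \<Rightarrow> nat \<Rightarrow> bool" where
  "GoodFam \<delta> K \<longleftrightarrow> (\<forall>j. 3 \<le> j \<and> j \<le> K \<longrightarrow> goodk j (\<delta> j))"

definition Inv :: "(nat \<Rightarrow> 'c \<Rightarrow> 'c list \<Rightarrow> rat) \<Rightarrow> nat \<Rightarrow> bool" where
  "Inv \<delta> N \<longleftrightarrow> (\<forall>c u. length u \<le> N \<longrightarrow> DD cdim (trunc N (TD \<delta>)) (trunc N (TD \<delta>) c) u = 0)"

lemma eps_props:
  assumes "GoodFam \<delta> N" "trunc N (TD \<delta>) c w \<noteq> 0"
  shows "set w \<subseteq> cl c \<and> 1 \<le> length w \<and> length w \<le> N \<and> sum_list (map cdim w) + 2 = cdim c + length w"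
proof -
  have lN: "length w \<le> N" and nz: "total_delta cdim bd \<Delta> \<delta> c w \<noteq> 0"
    using assms(2) unfolding trunc_def TD_def by (metis)+
  consider "length w = 0" | "length w = 1" | "length w = 2" | "length w \<ge> 3" by linarith
  then show ?thesis
  proof cases
    case 1 then show ?thesis using nz unfolding total_delta_def by simp
  next
    case 2
    then obtain f where w: "w = [f]" by (auto simp: length_Suc_conv)
    then have "bd c f \<noteq> 0" using nz unfolding total_delta_def by simp
    then have "f \<in> cl c \<and> cdim f + 1 = cdim c" by (rule bd_nz)
    then show ?thesis using w lN by simp
  next
    case 3
    then obtain a b where w: "w = [a, b]" by (auto simp: length_Suc_conv numeral_2_eq_2)
    then have d: "\<Delta> c a b \<noteq> 0" using nz unfolding total_delta_def by simp
    have "a \<in> cl c \<and> b \<in> cl c" using loc2 d by blast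
    moreover have "cdim a + cdim b = cdim c" using deg2 d by blast
    ultimately show ?thesis using w lN by simp
  next
    case 4
    then have d: "\<delta> (length w) c w \<noteq> 0" using nz unfolding total_delta_def by simp
    have g: "goodk (length w) (\<delta> (length w))" using assms(1) 4 lN unfolding GoodFam_def by blast
    then have "set w \<subseteq> cl c" using d unfolding goodk_def local_map_def by blast
    moreover have "sum_list (map cdim w) + 2 = cdim c + length w" using g d unfolding goodk_def by blast
    ultimately show ?thesis using 4 lN by simp
  qed
qed

lemma eps_fsupp:
  assumes "GoodFam \<delta> N"
  shows "fsupp (trunc N (TD \<delta>) c)"
proof -
  have "{w. trunc N (TD \<delta>) c w \<noteq> 0} \<subseteq> {w. set w \<subseteq> cl c \<and> length w \<le> N}"
    using eps_props[OF assms] by blast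
  moreover have "finite {w. set w \<subseteq> cl c \<and> length w \<le> N}"
    by (rule finite_lists_length_le[OF cl_fin])
  ultimately show ?thesis unfolding fsupp_def by (rule finite_subset)
qed

lemma eps_nice:
  assumes "GoodFam \<delta> N"
  shows "nice cdim (trunc N (TD \<delta>))"
  unfolding nice_def
proof (intro conjI allI impI)
  fix c show "fsupp (trunc N (TD \<delta>) c)" by (rule eps_fsupp[OF assms])
next
  fix c w assume "trunc N (TD \<delta>) c w \<noteq> 0"
  then have h: "sum_list (map cdim w) + 2 = cdim c + length w" "1 \<le> length w"
    using eps_props[OF assms] by blast+
  have par: "\<And>a b c::nat. a + 2 = c + b \<Longrightarrow> even (a + b) = even c" by presburger
  have "even (sum_list (map cdim w) + length w) = even (cdim c)" by (rule par[OF h(1)])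
  then show "psign cdim w = - psign cdim [c]"
    by (auto simp: psign_def)
qed

lemma eps_len0[simp]: "trunc N (TD \<delta>) c [] = 0"
  by (simp add: trunc_def TD_def total_delta_def)

lemma eps_len1: "1 \<le> N \<Longrightarrow> trunc N (TD \<delta>) c [f] = bd c f"
  by (simp add: trunc_def TD_def total_delta_def)

lemma eps_len2: "2 \<le> N \<Longrightarrow> trunc N (TD \<delta>) c [a, b] = (- 1) ^ cdim a * \<Delta> c a b"
  by (simp add: trunc_def TD_def total_delta_def)

lemma eps_e1: "1 \<le> N \<Longrightarrow> length w \<le> 1 \<Longrightarrow> trunc N (TD \<delta>) c w = e1 c w"
  by (cases w) (auto simp: trunc_def TD_def total_delta_def e1_def)

lemma eps_zero_cell:
  assumes "GoodFam \<delta> N" "2 \<le> N" "cdim c = 0"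
  shows "trunc N (TD \<delta>) c = (\<lambda>w. if w = [c, c] then \<Delta> c c c else 0)"
proof (rule ext)
  fix w
  show "trunc N (TD \<delta>) c w = (if w = [c, c] then \<Delta> c c c else 0)"
  proof (cases "w = [c, c]")
    case True then show ?thesis using eps_len2[OF assms(2)] assms(3) by simp
  next
    case False
    show ?thesis
    proof (rule ccontr)
      assume "trunc N (TD \<delta>) c w \<noteq> (if w = [c, c] then \<Delta> c c c else 0)"
      then have "trunc N (TD \<delta>) c w \<noteq> 0" using False by simp
      then have h: "set w \<subseteq> {c}" "sum_list (map cdim w) + 2 = length w"
        using eps_props[OF assms(1)] cl0[OF assms(3)] assms(3) by auto
      have "map cdim w = replicate (length w) 0"
        using h(1) assms(3) by (induction w) auto
      then have "length w = 2" using h(2) by (simp add: sum_list_replicate)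
      then obtain a b where "w = [a, b]" by (auto simp: length_Suc_conv numeral_2_eq_2)
      then have "w = [c, c]" using h(1) by simp
      then show False using False by simp
    qed
  qed
qed

lemma Phi_zero_cell:
  assumes "GoodFam \<delta> N" "2 \<le> N" "cdim c = 0"
  shows "Phi cdim (trunc N (TD \<delta>)) [c] u = 0"
proof -
  let ?e = "trunc N (TD \<delta>)"
  have ec: "?e c = (\<lambda>w. if w = [c, c] then \<Delta> c c c else 0)" by (rule eps_zero_cell[OF assms])
  have fe: "fsupp (?e c)" by (rule eps_fsupp[OF assms(1)])
  have "Phi cdim ?e [c] u = ext (Dw cdim ?e) (?e c) u" by (simp add: Phi_def DD_def)
  also have "\<dots> = (\<Sum>v\<in>{[c, c]}. ?e c v * Dw cdim ?e v u)"
    by (rule ext_eq) (auto simp: supp_def ec)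
  also have "\<dots> = \<Delta> c c c * (rmul (?e c) [c] u + psign cdim [c] * lmul [c] (?e c) u)"
    by (simp add: ec)
  also have "rmul (?e c) [c] = (\<lambda>u. if u = [c, c, c] then \<Delta> c c c else 0)"
    by (rule rmul_eqI) (auto simp: ec)
  also have "lmul [c] (?e c) = (\<lambda>u. if u = [c, c, c] then \<Delta> c c c else 0)"
    by (rule lmul_eqI) (auto simp: ec)
  finally show ?thesis using assms(3) by (simp add: psign_single)
qed

lemma Dw_track:
  assumes "\<And>c w. \<epsilon> c w \<noteq> 0 \<Longrightarrow> sd cdim w = sd cdim [c] - 1 \<and> set w \<subseteq> cl c"
    and "Dw cdim \<epsilon> v u \<noteq> 0"
  shows "sd cdim u = sd cdim v - 1 \<and> set u \<subseteq> (\<Union>x\<in>set v. cl x)"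
proof -
  obtain p c s w where pcs: "v = p @ c # s" "u = p @ w @ s" "\<epsilon> c w \<noteq> 0" using Dw_nz[OF assms(2)] by blast
  have w: "sd cdim w = sd cdim [c] - 1" "set w \<subseteq> cl c" using assms(1)[OF pcs(3)] by auto
  have "sd cdim v = sd cdim p + sd cdim [c] + sd cdim s" using pcs(1) by (simp add: sd_def)
  moreover have "sd cdim u = sd cdim p + sd cdim w + sd cdim s" using pcs(2) by (simp add: sd_def)
  ultimately have "sd cdim u = sd cdim v - 1" using w(1) by simp
  moreover have "set u \<subseteq> (\<Union>x\<in>set v. cl x)"
  proof
    fix y assume "y \<in> set u"
    then have "y \<in> set p \<or> y \<in> set w \<or> y \<in> set s" using pcs(2) by auto
    moreover have "c \<in> set v" "set p \<subseteq> set v" "set s \<subseteq> set v" using pcs(1) by auto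
    ultimately show "y \<in> (\<Union>x\<in>set v. cl x)" using w(2) cl_self by blast
  qed
  ultimately show ?thesis by blast
qed

lemma DD_track:
  assumes "\<And>c w. \<epsilon> c w \<noteq> 0 \<Longrightarrow> sd cdim w = sd cdim [c] - 1 \<and> set w \<subseteq> cl c"
    and "DD cdim \<epsilon> t u \<noteq> 0"
  shows "\<exists>v. t v \<noteq> 0 \<and> sd cdim u = sd cdim v - 1 \<and> set u \<subseteq> (\<Union>x\<in>set v. cl x)"
proof -
  obtain v where v: "t v \<noteq> 0" "Dw cdim \<epsilon> v u \<noteq> 0" using ext_nz[OF assms(2)[unfolded DD_def]] by blast
  have "sd cdim u = sd cdim v - 1 \<and> set u \<subseteq> (\<Union>x\<in>set v. cl x)" by (rule Dw_track[OF assms(1) v(2)])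
  then show ?thesis using v(1) by (intro exI[of _ v]) simp
qed

lemma eps_track:
  assumes "GoodFam \<delta> N" "trunc N (TD \<delta>) c w \<noteq> 0"
  shows "sd cdim w = sd cdim [c] - 1 \<and> set w \<subseteq> cl c"
proof -
  have h: "set w \<subseteq> cl c" "sum_list (map cdim w) + 2 = cdim c + length w" using eps_props[OF assms] by blast+
  have "int (sum_list (map cdim w)) + 2 = int (cdim c) + int (length w)" using arg_cong[OF h(2), of int] by simp
  then show ?thesis using h(1) by (simp add: sd_def)
qed

lemma base_inv: "Inv \<delta> 2"
  unfolding Inv_def
proof (intro allI impI)
  fix c and u :: "'c list" assume lu: "length u \<le> 2"
  let ?e = "trunc 2 (TD \<delta>)"
  have gf: "GoodFam \<delta> 2" unfolding GoodFam_def by auto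
  have "DD cdim ?e (?e c) u = (\<Sum>f\<in>cl c. ?e c [f] * Dw cdim ?e [f] u) + (\<Sum>x\<in>cl c. \<Sum>y\<in>cl c. ?e c [x, y] * Dw cdim ?e [x, y] u)"
    unfolding DD_def
  proof (rule ext_12[OF eps_fsupp[OF gf] cl_fin])
    fix v assume "?e c v \<noteq> 0"
    then have "set v \<subseteq> cl c" "1 \<le> length v" "length v \<le> 2" using eps_props[OF gf] by blast+
    then consider "length v = 1" | "length v = 2" by linarith
    then show "(\<exists>f\<in>cl c. v = [f]) \<or> (\<exists>x\<in>cl c. \<exists>y\<in>cl c. v = [x, y])"
    proof cases
      case 1 then obtain f where "v = [f]" by (auto simp: length_Suc_conv)
      then show ?thesis using \<open>set v \<subseteq> cl c\<close> by auto
    next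
      case 2 then obtain a b where "v = [a, b]" by (auto simp: length_Suc_conv numeral_2_eq_2)
      then show ?thesis using \<open>set v \<subseteq> cl c\<close> by auto
    qed
  qed
  also have "\<dots> = 0"
  proof -
    consider "length u = 0" | "length u = 1" | "length u = 2" using lu by linarith
    then consider "u = []" | a where "u = [a]" | a b where "u = [a, b]"
      by (metis length_0_conv length_Suc_conv One_nat_def numeral_2_eq_2)
    then show ?thesis
    proof cases
      case 1 then show ?thesis by (simp add: rmul_def lmul_def)
    next
      case 2
      have "(\<Sum>f\<in>cl c. ?e c [f] * Dw cdim ?e [f] u) = (\<Sum>f\<in>cl c. bd c f * bd f a)"
        using 2 by (simp add: eps_len1)
      moreover have "Dw cdim ?e [x, y] u = 0" for x y
        using 2 by (simp add: rmul_def lmul_def)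
      ultimately show ?thesis by (simp add: bdbd)
    next
      case 3
      let ?s = "(- 1 :: rat) ^ cdim a"
      have A: "(\<Sum>f\<in>cl c. ?e c [f] * Dw cdim ?e [f] u) = ?s * (\<Sum>f\<in>cl c. bd c f * \<Delta> f a b)"
        using 3 by (simp add: eps_len1 eps_len2 sum_distrib_left algebra_simps)
      have Dw2: "Dw cdim ?e [x, y] u = (if y = b then bd x a else 0) + psign cdim [x] * (if x = a then bd y b else 0)" for x y
      proof -
        have "rmul (?e x) [y] [a, b] = (if y = b then bd x a else 0)"
          using rmul_app[of "?e x" "[y]" "[a]"] by (auto simp: eps_len1 rmul_other)
        moreover have "lmul [x] (?e y) [a, b] = (if x = a then bd y b else 0)"
          using lmul_app[of "[x]" "?e y" "[b]"] by (auto simp: eps_len1 lmul_other)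
        ultimately show ?thesis using 3 by simp
      qed
      have "(\<Sum>x\<in>cl c. \<Sum>y\<in>cl c. ?e c [x, y] * Dw cdim ?e [x, y] u)
          = (\<Sum>x\<in>cl c. \<Sum>y\<in>cl c. (if y = b then ?e c [x, y] * bd x a else 0))
          + (\<Sum>x\<in>cl c. (if x = a then (\<Sum>y\<in>cl c. ?e c [x, y] * psign cdim [x] * bd y b) else 0))"
      proof -
        have "(\<Sum>x\<in>cl c. \<Sum>y\<in>cl c. ?e c [x, y] * Dw cdim ?e [x, y] u)
           = (\<Sum>x\<in>cl c. \<Sum>y\<in>cl c. (if y = b then ?e c [x, y] * bd x a else 0) + (if x = a then ?e c [x, y] * psign cdim [x] * bd y b else 0))"
          by (intro sum.cong refl) (simp only: Dw2, simp add: ring_distribs)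
        also have "\<dots> = (\<Sum>x\<in>cl c. \<Sum>y\<in>cl c. (if y = b then ?e c [x, y] * bd x a else 0))
           + (\<Sum>x\<in>cl c. \<Sum>y\<in>cl c. (if x = a then ?e c [x, y] * psign cdim [x] * bd y b else 0))"
          by (simp only: sum.distrib)
        also have "(\<Sum>x\<in>cl c. \<Sum>y\<in>cl c. (if x = a then ?e c [x, y] * psign cdim [x] * bd y b else 0))
           = (\<Sum>x\<in>cl c. (if x = a then (\<Sum>y\<in>cl c. ?e c [x, y] * psign cdim [x] * bd y b) else 0))"
          by (intro sum.cong refl) (case_tac "x = a", simp_all)
        finally show ?thesis .
      qed
      also have "(\<Sum>x\<in>cl c. \<Sum>y\<in>cl c. (if y = b then ?e c [x, y] * bd x a else 0)) = (\<Sum>x\<in>cl c. ?e c [x, b] * bd x a)"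
        by (rule sum.cong[OF refl], rule sum_if_eq[OF cl_fin]) (simp add: eps_len2, metis loc2)
      also have "\<dots> = - ?s * (\<Sum>x\<in>cl c. \<Delta> c x b * bd x a)"
        unfolding sum_distrib_left
      proof (rule sum.cong[OF refl])
        fix x assume "x \<in> cl c"
        show "?e c [x, b] * bd x a = - ?s * (\<Delta> c x b * bd x a)"
        proof (cases "bd x a = 0")
          case False
          then have "cdim x = Suc (cdim a)" using bd_nz by fastforce
          then show ?thesis by (simp add: eps_len2)
        qed simp
      qed
      also have "(\<Sum>x\<in>cl c. (if x = a then (\<Sum>y\<in>cl c. ?e c [x, y] * psign cdim [x] * bd y b) else 0))
          = (\<Sum>y\<in>cl c. ?e c [a, y] * psign cdim [a] * bd y b)"
        by (rule sum_if_eq[OF cl_fin]) (auto simp: eps_len2 loc2 intro!: sum.neutral)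
      also have "\<dots> = - (\<Sum>y\<in>cl c. \<Delta> c a y * bd y b)"
        by (simp add: eps_len2 psign_single sum_negf[symmetric] algebra_simps)
      finally have B: "(\<Sum>x\<in>cl c. \<Sum>y\<in>cl c. ?e c [x, y] * Dw cdim ?e [x, y] u)
          = - ?s * (\<Sum>x\<in>cl c. \<Delta> c x b * bd x a) - (\<Sum>y\<in>cl c. \<Delta> c a y * bd y b)" by simp
      have cm: "(\<Sum>f\<in>cl c. bd c f * \<Delta> f a b) = (\<Sum>x\<in>cl c. \<Delta> c x b * bd x a) + ?s * (\<Sum>y\<in>cl c. \<Delta> c a y * bd y b)"
        using chain_map by (simp add: sum_distrib_left algebra_simps)
      have ss: "?s * ?s = 1" by (simp add: power_mult_distrib[symmetric])
      show ?thesis unfolding A B cm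
        by (simp add: algebra_simps ss)
    qed
  qed
  finally show "DD cdim ?e (?e c) u = 0" .
qed

end

context MAIN
begin

lemma acyc_cl:
  assumes "tsup (cl c) k m z" "1 \<le> m" "\<forall>u. dd z u = 0"
  shows "\<exists>y. tsup (cl c) k (Suc m) y \<and> (\<forall>u. dd y u = z u)"
proof -
  have clo: "\<And>x. x \<in> cl c \<Longrightarrow> cl x \<subseteq> cl c" by (rule cl_trans)
  obtain z0 P H where hd: "HD (cl c) z0 P H"
    using HD_exists[OF acyc_h[rule_format, of c] clo] by blast
  show ?thesis by (rule acyc[OF hd clo assms])
qed

lemma dd_len: "dd t u \<noteq> 0 \<Longrightarrow> \<exists>v. t v \<noteq> 0 \<and> length v = length u"
proof -
  assume "dd t u \<noteq> 0"
  then obtain v p c s w where h: "t v \<noteq> 0" "v = p @ c # s" "u = p @ w @ s" "e1 c w \<noteq> 0"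
    using DD_nz by blast
  then obtain f where "w = [f]" using e1_nz by blast
  then show ?thesis using h by (intro exI[of _ v]) simp
qed

lemma step:
  assumes k3: "3 \<le> k" and gf: "GoodFam \<delta> (k - 1)" and inv: "Inv \<delta> (k - 1)"
  shows "\<exists>g. goodk k g \<and> Inv (\<delta>(k := g)) k"
proof -
  define N where "N = k - 1"
  have N2: "2 \<le> N" and kN: "k = Suc N" using k3 by (auto simp: N_def)
  define \<epsilon> where "\<epsilon> = trunc N (TD \<delta>)"
  have gfN: "GoodFam \<delta> N" using gf by (simp add: N_def)
  have nice: "nice cdim \<epsilon>" unfolding \<epsilon>_def by (rule eps_nice[OF gfN])
  have fe: "\<And>c. fsupp (\<epsilon> c)" unfolding \<epsilon>_def by (rule eps_fsupp[OF gfN])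
  have props: "\<And>c w. \<epsilon> c w \<noteq> 0 \<Longrightarrow> set w \<subseteq> cl c \<and> 1 \<le> length w \<and> length w \<le> N \<and> sum_list (map cdim w) + 2 = cdim c + length w"
    unfolding \<epsilon>_def by (rule eps_props[OF gfN])
  have track: "\<And>c w. \<epsilon> c w \<noteq> 0 \<Longrightarrow> sd cdim w = sd cdim [c] - 1 \<and> set w \<subseteq> cl c"
    unfolding \<epsilon>_def by (rule eps_track[OF gfN])
  have e_e1: "\<And>c w. length w \<le> 1 \<Longrightarrow> \<epsilon> c w = e1 c w"
    unfolding \<epsilon>_def using N2 by (intro eps_e1) auto
  have e_1: "\<And>c f. \<epsilon> c [f] = bd c f" unfolding \<epsilon>_def using N2 by (intro eps_len1) auto
  have fDw: "\<And>v. fsupp (Dw cdim \<epsilon> v)" by (rule fsupp_Dw) (rule fe)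
  have PhiDD: "\<And>c. Phi cdim \<epsilon> [c] = DD cdim \<epsilon> (\<epsilon> c)" by (simp add: Phi_def)
  have fP: "\<And>c. fsupp (Phi cdim \<epsilon> [c])" unfolding PhiDD by (rule fsupp_DD[OF fe fe])
  have Phi_low: "\<And>x u. length u < k \<Longrightarrow> Phi cdim \<epsilon> [x] u = 0"
  proof -
    fix x and u :: "'c list" assume "length u < k"
    then have "length u \<le> N" using kN by simp
    then have "DD cdim \<epsilon> (\<epsilon> x) u = 0" using inv unfolding Inv_def \<epsilon>_def N_def by blast
    then show "Phi cdim \<epsilon> [x] u = 0" by (simp add: PhiDD)
  qed
  have Phi_len': "\<And>v u. Phi cdim \<epsilon> v u \<noteq> 0 \<Longrightarrow> length v + k \<le> length u + 1"
    by (rule Phi_len[OF nice Phi_low]) auto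
  define R where "R = (\<lambda>c u. if length u = k then Phi cdim \<epsilon> [c] u else 0)"
  have fR: "\<And>c. fsupp (R c)" unfolding R_def by (rule fsupp_mono[OF fP]) (simp split: if_splits)
  have R_supp: "length u = k \<and> set u \<subseteq> cl c \<and> sum_list (map cdim u) + 3 = cdim c + k" if "R c u \<noteq> 0" for c u
  proof -
    have lu: "length u = k" and nz: "DD cdim \<epsilon> (\<epsilon> c) u \<noteq> 0" using that by (auto simp: R_def PhiDD split: if_splits)
    obtain v where v: "\<epsilon> c v \<noteq> 0" "sd cdim u = sd cdim v - 1" "set u \<subseteq> (\<Union>x\<in>set v. cl x)"
      using DD_track[OF track nz] by blast
    have "sd cdim v = sd cdim [c] - 1" "set v \<subseteq> cl c" using track[OF v(1)] by auto
    then have "set u \<subseteq> cl c" "sd cdim u = int (cdim c) - 3" using v cl_trans by (auto simp: sd_def) blast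
    then show ?thesis using lu by (auto simp: sd_def)
  qed
  have R0: "\<And>c u. cdim c = 0 \<Longrightarrow> R c u = 0"
    unfolding R_def \<epsilon>_def using Phi_zero_cell[OF gfN N2] by simp
  have R_cycle: "dd (R c) u = (\<Sum>f\<in>cl c. bd c f * R f u)" if lu: "length u = k" for c u
  proof -
    have "DD cdim \<epsilon> (Phi cdim \<epsilon> [c]) u = dd (Phi cdim \<epsilon> [c]) u"
    proof (rule DD_cong_eps)
      fix v :: "'c list" and c' and w :: "'c list" assume "Phi cdim \<epsilon> [c] v \<noteq> 0" "length u + 1 = length v + length w"
      moreover have "k \<le> length v" using Phi_low \<open>Phi cdim \<epsilon> [c] v \<noteq> 0\<close> by (meson not_le)
      ultimately show "\<epsilon> c' w = e1 c' w" using lu by (intro e_e1) simp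
    qed
    also have "\<dots> = dd (R c) u"
    proof (rule DD_cong_t[OF fP fR])
      fix v :: "'c list" and c' and w :: "'c list" assume "e1 c' w \<noteq> 0" "length u + 1 = length v + length w"
      then have "length v = k" using lu e1_nz by fastforce
      then show "Phi cdim \<epsilon> [c] v = R c v" by (simp add: R_def)
    qed
    finally have 1: "DD cdim \<epsilon> (Phi cdim \<epsilon> [c]) u = dd (R c) u" .
    have "DD cdim \<epsilon> (Phi cdim \<epsilon> [c]) u = ext (Phi cdim \<epsilon>) (\<epsilon> c) u"
      unfolding PhiDD DD_def[of cdim \<epsilon> "\<epsilon> c"] by (subst DD_ext[OF fe fDw]) (simp add: Phi_def[abs_def])
    also have "\<dots> = (\<Sum>f\<in>cl c. \<epsilon> c [f] * Phi cdim \<epsilon> [f] u)"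
    proof (rule ext_letters[OF fe cl_fin])
      fix v assume v: "\<epsilon> c v \<noteq> 0" "Phi cdim \<epsilon> v u \<noteq> 0"
      have "length v \<le> 1" using Phi_len'[OF v(2)] lu by simp
      moreover have "1 \<le> length v" "set v \<subseteq> cl c" using props[OF v(1)] by auto
      ultimately obtain f where "v = [f]" "f \<in> cl c" by (cases v) auto
      then show "\<exists>f\<in>cl c. v = [f]" by blast
    qed
    also have "\<dots> = (\<Sum>f\<in>cl c. bd c f * R f u)" using lu by (simp add: e_1 R_def)
    finally show ?thesis using 1 by simp
  qed
  define Qk where "Qk = (\<lambda>G c y. fsupp y \<and>
      (\<forall>u. y u \<noteq> 0 \<longrightarrow> length u = k \<and> set u \<subseteq> cl c \<and> sum_list (map cdim u) + 2 = cdim c + k) \<and>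
      (cdim c = 0 \<longrightarrow> (\<forall>u. y u = 0)) \<and>
      (\<forall>u. length u = k \<longrightarrow> dd y u + R c u + (\<Sum>f\<in>cl c. bd c f * G f u) = 0))"
  have loc: "Qk G' c y" if agree: "\<And>f. cdim f < cdim c \<Longrightarrow> G f = G' f" and q: "Qk G c y" for G G' c y
  proof -
    have "(\<Sum>f\<in>cl c. bd c f * G f u) = (\<Sum>f\<in>cl c. bd c f * G' f u)" for u
    proof (rule sum.cong[OF refl])
      fix f assume "f \<in> cl c"
      show "bd c f * G f u = bd c f * G' f u"
      proof (cases "bd c f = 0")
        case False
        then have "cdim f < cdim c" using bd_nz by fastforce
        then show ?thesis using agree by simp
      qed simp
    qed
    then show ?thesis using q by (simp add: Qk_def)
  qed
  have ex: "\<exists>y. Qk G c y" if IH: "\<And>f. cdim f < cdim c \<Longrightarrow> Qk G f (G f)" for G c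
  proof (cases "cdim c = 0")
    case True
    have "Qk G c (\<lambda>_. 0)" unfolding Qk_def using True by (simp add: R0 bd0)
    then show ?thesis by blast
  next
    case cpos: False
    have Gf: "fsupp (G f) \<and> (\<forall>u. G f u \<noteq> 0 \<longrightarrow> length u = k \<and> set u \<subseteq> cl f \<and> sum_list (map cdim u) + 2 = cdim f + k) \<and>
        (\<forall>u. length u = k \<longrightarrow> dd (G f) u + R f u + (\<Sum>g\<in>cl f. bd f g * G g u) = 0)"
      if "bd c f \<noteq> 0" for f
    proof -
      have "cdim f < cdim c" using bd_nz[OF that] by simp
      then show ?thesis using IH unfolding Qk_def by blast
    qed
    define B where "B = (\<lambda>u. \<Sum>f\<in>cl c. bd c f * G f u)"
    have fGs: "\<And>f. fsupp (\<lambda>u. bd c f * G f u)"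
      by (case_tac "bd c f = 0") (auto intro: fsupp_scale dest: Gf)
    have fB: "fsupp B" unfolding B_def by (rule fsupp_sum[OF cl_fin fGs])
    define r where "r = (\<lambda>u. - (R c u + B u))"
    have fr: "fsupp r" unfolding r_def by (intro fsupp_neg fsupp_add fR fB)
    have r_supp: "length u = k \<and> set u \<subseteq> cl c \<and> sum_list (map cdim u) + 3 = cdim c + k" if "r u \<noteq> 0" for u
    proof (cases "R c u = 0")
      case False then show ?thesis using R_supp by blast
    next
      case True
      then have "B u \<noteq> 0" using that by (simp add: r_def)
      then obtain f where f: "f \<in> cl c" "bd c f * G f u \<noteq> 0" unfolding B_def
        by (meson sum.not_neutral_contains_not_neutral)
      then have bf: "bd c f \<noteq> 0" and gu: "G f u \<noteq> 0" by auto
      have "f \<in> cl c \<and> cdim f + 1 = cdim c" using bd_nz[OF bf] .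
      moreover have "length u = k \<and> set u \<subseteq> cl f \<and> sum_list (map cdim u) + 2 = cdim f + k" using Gf[OF bf] gu by blast
      ultimately show ?thesis using cl_trans by fastforce
    qed
    define m where "m = cdim c + k - 3"
    have tr: "tsup (cl c) k m r" unfolding tsup_def m_def using fr r_supp by force
    have m1: "1 \<le> m" using cpos k3 by (simp add: m_def)
    have dr: "\<forall>u. dd r u = 0"
    proof
      fix u
      show "dd r u = 0"
      proof (cases "length u = k")
        case False
        show ?thesis
        proof (rule ccontr)
          assume "dd r u \<noteq> 0"
          then obtain v where "r v \<noteq> 0" "length v = length u" using dd_len by blast
          then show False using r_supp False by fastforce
        qed
      next
        case lu: True
        have "dd r u = - dd (\<lambda>u. R c u + B u) u" unfolding r_def by (rule DD_neg_t)
        also have "dd (\<lambda>u. R c u + B u) u = dd (R c) u + dd B u" by (rule DD_add_t[OF fR fB])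
        also have "dd B u = (\<Sum>f\<in>cl c. bd c f * dd (G f) u)"
          unfolding B_def by (simp add: DD_sum_t[OF cl_fin fGs] DD_scale_t)
        also have "\<dots> = (\<Sum>f\<in>cl c. bd c f * (- R f u - (\<Sum>g\<in>cl f. bd f g * G g u)))"
        proof (rule sum.cong[OF refl])
          fix f assume "f \<in> cl c"
          show "bd c f * dd (G f) u = bd c f * (- R f u - (\<Sum>g\<in>cl f. bd f g * G g u))"
          proof (cases "bd c f = 0")
            case False
            have "dd (G f) u + R f u + (\<Sum>g\<in>cl f. bd f g * G g u) = 0" using Gf[OF False] lu by blast
            then have "dd (G f) u = - R f u - (\<Sum>g\<in>cl f. bd f g * G g u)" by linarith
            then show ?thesis by simp
          qed simp
        qed
        also have "\<dots> = - (\<Sum>f\<in>cl c. bd c f * R f u) - (\<Sum>f\<in>cl c. bd c f * (\<Sum>g\<in>cl f. bd f g * G g u))"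
          by (simp add: ring_distribs sum_subtractf sum_negf)
        finally show ?thesis by (simp add: R_cycle[OF lu] bdbd_gen)
      qed
    qed
    obtain y where y: "tsup (cl c) k (Suc m) y" "\<forall>u. dd y u = r u"
      using acyc_cl[OF tr m1 dr] by blast
    have "Qk G c y"
      unfolding Qk_def
    proof (intro conjI)
      show "fsupp y" using y(1) by (simp add: tsup_def)
      show "\<forall>u. y u \<noteq> 0 \<longrightarrow> length u = k \<and> set u \<subseteq> cl c \<and> sum_list (map cdim u) + 2 = cdim c + k"
        using y(1) cpos k3 by (auto simp: tsup_def m_def)
      show "cdim c = 0 \<longrightarrow> (\<forall>u. y u = 0)" using cpos by simp
      show "\<forall>u. length u = k \<longrightarrow> dd y u + R c u + (\<Sum>f\<in>cl c. bd c f * G f u) = 0"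
        using y(2) by (simp add: r_def B_def)
    qed
    then show ?thesis by blast
  qed
  have "\<exists>G. \<forall>c. Qk G c (G c)"
  proof (rule build_by_dim[of cdim Qk])
    fix G G' c y assume "\<And>f. cdim f < cdim c \<Longrightarrow> G f = G' f" "Qk G c y" then show "Qk G' c y" by (rule loc)
  next
    fix G c assume "\<And>f. cdim f < cdim c \<Longrightarrow> Qk G f (G f)" then show "\<exists>y. Qk G c y" by (rule ex)
  qed
  then obtain g where g: "\<And>c. Qk g c (g c)" by blast
  have gf_: "\<And>c. fsupp (g c)"
    and gs: "\<And>c u. g c u \<noteq> 0 \<Longrightarrow> length u = k \<and> set u \<subseteq> cl c \<and> sum_list (map cdim u) + 2 = cdim c + k"
    and g0: "\<And>c u. cdim c = 0 \<Longrightarrow> g c u = 0"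
    and geq: "\<And>c u. length u = k \<Longrightarrow> dd (g c) u + R c u + (\<Sum>f\<in>cl c. bd c f * g f u) = 0"
    using g unfolding Qk_def by blast+
  have goodg: "goodk k g" unfolding goodk_def local_map_def using gs g0 by blast
  define \<epsilon>' where "\<epsilon>' = trunc k (TD (\<delta>(k := g)))"
  have e'eq: "\<epsilon>' = (\<lambda>c w. \<epsilon> c w + g c w)"
  proof (intro ext)
    fix c and w :: "'c list"
    consider "length w \<le> N" | "length w = k" | "length w > k" using kN by linarith
    then show "\<epsilon>' c w = \<epsilon> c w + g c w"
    proof cases
      case 1
      then have "g c w = 0" using gs kN by fastforce
      moreover have "length w \<noteq> k" using 1 kN by simp
      ultimately show ?thesis using 1 kN unfolding \<epsilon>'_def \<epsilon>_def trunc_def TD_def total_delta_def by simp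
    next
      case 2
      then show ?thesis using k3 N2 kN unfolding \<epsilon>'_def \<epsilon>_def trunc_def TD_def total_delta_def by simp
    next
      case 3
      then have "g c w = 0" using gs by fastforce
      then show ?thesis using 3 kN unfolding \<epsilon>'_def \<epsilon>_def trunc_def by simp
    qed
  qed
  have "Inv (\<delta>(k := g)) k"
    unfolding Inv_def \<epsilon>'_def[symmetric]
  proof (intro allI impI)
    fix c and u :: "'c list" assume lu: "length u \<le> k"
    have "DD cdim \<epsilon>' (\<epsilon>' c) u = DD cdim \<epsilon> (\<epsilon> c) u + DD cdim \<epsilon> (g c) u + (DD cdim g (\<epsilon> c) u + DD cdim g (g c) u)"
      unfolding e'eq DD_add_eps by (simp add: DD_add_t[OF fe gf_])
    moreover have A1: "DD cdim \<epsilon> (g c) u = 0" if "length u < k"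
    proof (rule ccontr)
      assume "DD cdim \<epsilon> (g c) u \<noteq> 0"
      then obtain v p c' s w where h: "g c v \<noteq> 0" "v = p @ c' # s" "u = p @ w @ s" "\<epsilon> c' w \<noteq> 0"
        using DD_nz by blast
      have "length v = k" using gs h(1) by blast
      moreover have "1 \<le> length w" using props h(4) by blast
      ultimately show False using h that by simp
    qed
    moreover have A2: "DD cdim g (\<epsilon> c) u = 0" if "length u < k"
    proof (rule ccontr)
      assume "DD cdim g (\<epsilon> c) u \<noteq> 0"
      then obtain v p c' s w where h: "\<epsilon> c v \<noteq> 0" "v = p @ c' # s" "u = p @ w @ s" "g c' w \<noteq> 0"
        using DD_nz by blast
      have "length w = k" using gs h(4) by blast
      then show False using h that by simp
    qed
    moreover have A3: "DD cdim g (g c) u = 0"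
    proof (rule ccontr)
      assume "DD cdim g (g c) u \<noteq> 0"
      then obtain v p c' s w where h: "g c v \<noteq> 0" "v = p @ c' # s" "u = p @ w @ s" "g c' w \<noteq> 0"
        using DD_nz by blast
      have "length w = k" "length v = k" using gs h(4) h(1) by blast+
      then show False using h lu k3 by simp
    qed
    ultimately have main: "DD cdim \<epsilon>' (\<epsilon>' c) u = DD cdim \<epsilon> (\<epsilon> c) u + DD cdim \<epsilon> (g c) u + DD cdim g (\<epsilon> c) u"
      by simp
    show "DD cdim \<epsilon>' (\<epsilon>' c) u = 0"
    proof (cases "length u < k")
      case True
      have "DD cdim \<epsilon> (\<epsilon> c) u = 0" using Phi_low[OF True] by (simp add: PhiDD)
      then show ?thesis using main A1[OF True] A2[OF True] by simp
    next
      case False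
      then have lk: "length u = k" using lu by simp
      have 1: "DD cdim \<epsilon> (\<epsilon> c) u = R c u" using lk by (simp add: R_def PhiDD)
      have 2: "DD cdim \<epsilon> (g c) u = dd (g c) u"
      proof (rule DD_cong_eps)
        fix v :: "'c list" and c' and w :: "'c list" assume "g c v \<noteq> 0" "length u + 1 = length v + length w"
        then have "length w = 1" using gs lk by fastforce
        then show "\<epsilon> c' w = e1 c' w" by (intro e_e1) simp
      qed
      have 3: "DD cdim g (\<epsilon> c) u = (\<Sum>f\<in>cl c. bd c f * g f u)"
      proof -
        have "DD cdim g (\<epsilon> c) u = (\<Sum>f\<in>cl c. \<epsilon> c [f] * Dw cdim g [f] u)"
          unfolding DD_def
        proof (rule ext_letters[OF fe cl_fin])
          fix v assume v: "\<epsilon> c v \<noteq> 0" "Dw cdim g v u \<noteq> 0"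
          then obtain p c' s w where h: "v = p @ c' # s" "u = p @ w @ s" "g c' w \<noteq> 0"
            using Dw_nz by blast
          have "length w = k" using gs h(3) by blast
          then have "length v = 1" using h lk by simp
          moreover have "set v \<subseteq> cl c" using props[OF v(1)] by blast
          ultimately obtain f where "v = [f]" "f \<in> cl c" by (cases v) auto
          then show "\<exists>f\<in>cl c. v = [f]" by blast
        qed
        then show ?thesis by (simp add: e_1)
      qed
      show ?thesis using main geq[OF lk, of c] by (simp add: 1 2 3)
    qed
  qed
  then show ?thesis using goodg by blast
qed

end

lemma deriv_cong:
  assumes "\<And>v. length v \<le> length u + 1 \<Longrightarrow> t v = t' v"
    and "\<And>c w. length w \<le> length u \<Longrightarrow> \<epsilon> c w = \<epsilon>' c w"
  shows "deriv cdim \<epsilon> t u = deriv cdim \<epsilon>' t' u"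
proof -
  have inner: "(\<Sum>c\<in>{c. t (take i u @ c # drop j u) \<noteq> 0}.
          psign cdim (take i u) * t (take i u @ c # drop j u) * \<epsilon> c (take (j - i) (drop i u))) =
        (\<Sum>c\<in>{c. t' (take i u @ c # drop j u) \<noteq> 0}.
          psign cdim (take i u) * t' (take i u @ c # drop j u) * \<epsilon>' c (take (j - i) (drop i u)))"
    if i: "i \<in> {0..length u}" and j: "j \<in> {i..length u}" for i j
  proof -
    have l: "\<And>c. length (take i u @ c # drop j u) \<le> length u + 1" using i j by auto
    have S: "{c. t (take i u @ c # drop j u) \<noteq> 0} = {c. t' (take i u @ c # drop j u) \<noteq> 0}"
      using assms(1)[OF l] by auto
    have T: "psign cdim (take i u) * t (take i u @ c # drop j u) * \<epsilon> c (take (j - i) (drop i u)) =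
          psign cdim (take i u) * t' (take i u @ c # drop j u) * \<epsilon>' c (take (j - i) (drop i u))" for c
    proof -
      have "length (take (j - i) (drop i u)) \<le> length u" by simp
      then show ?thesis using assms(1)[OF l] assms(2) by simp
    qed
    show ?thesis unfolding S T ..
  qed
  show ?thesis unfolding deriv_def
    by (rule sum.cong[OF refl], rule sum.cong[OF refl], rule inner) auto
qed

context MAIN
begin

primrec fam :: "nat \<Rightarrow> nat \<Rightarrow> 'c \<Rightarrow> 'c list \<Rightarrow> rat" where
  "fam 0 = (\<lambda>_ _ _. 0)"
| "fam (Suc n) = (if 3 \<le> Suc n
     then (fam n)(Suc n := (SOME g. goodk (Suc n) g \<and> Inv ((fam n)(Suc n := g)) (Suc n)))
     else fam n)"

lemma fam_stab: "j \<le> n \<Longrightarrow> fam n j = fam j j"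
proof (induction n)
  case 0 then show ?case by simp
next
  case (Suc n)
  show ?case
  proof (cases "j = Suc n")
    case False
    then have "j \<le> n" using Suc.prems by simp
    then show ?thesis using Suc.IH False by simp
  qed simp
qed

lemma fam_inv: "2 \<le> n \<Longrightarrow> GoodFam (fam n) n \<and> Inv (fam n) n"
proof (induction n)
  case 0 then show ?case by simp
next
  case (Suc n)
  show ?case
  proof (cases "n < 2")
    case True
    then have s2: "Suc n = 2" using Suc.prems by simp
    have "Inv (fam (Suc n)) 2" by (rule base_inv)
    then have "Inv (fam (Suc n)) (Suc n)" using s2 by (simp only:)
    moreover have "GoodFam (fam (Suc n)) (Suc n)" using s2 unfolding GoodFam_def by auto
    ultimately show ?thesis by blast
  next
    case False
    then have IH: "GoodFam (fam n) n" "Inv (fam n) n" using Suc.IH by auto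
    have k3: "3 \<le> Suc n" using False by simp
    have "\<exists>g. goodk (Suc n) g \<and> Inv ((fam n)(Suc n := g)) (Suc n)"
      using step[OF k3] IH by simp
    then have sg: "goodk (Suc n) (SOME g. goodk (Suc n) g \<and> Inv ((fam n)(Suc n := g)) (Suc n)) \<and>
        Inv ((fam n)(Suc n := (SOME g. goodk (Suc n) g \<and> Inv ((fam n)(Suc n := g)) (Suc n)))) (Suc n)"
      by (rule someI_ex)
    have "GoodFam (fam (Suc n)) (Suc n)"
      unfolding GoodFam_def
    proof (intro allI impI)
      fix j assume j: "3 \<le> j \<and> j \<le> Suc n"
      show "goodk j (fam (Suc n) j)"
      proof (cases "j = Suc n")
        case True then show ?thesis using sg k3 by simp
      next
        case False
        then have "goodk j (fam n j)" using IH(1) j unfolding GoodFam_def by simp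
        then show ?thesis using False k3 by simp
      qed
    qed
    moreover have "Inv (fam (Suc n)) (Suc n)" using sg k3 by simp
    ultimately show ?thesis by blast
  qed
qed

theorem main_loc:
  "\<exists>\<delta> :: nat \<Rightarrow> 'c \<Rightarrow> 'c list \<Rightarrow> rat.
     (\<forall>k\<ge>3. local_map cl (\<delta> k)) \<and>
     (\<forall>k\<ge>3. \<forall>e w. cdim e = 0 \<longrightarrow> \<delta> k e w = 0) \<and>
     (\<forall>k\<ge>3. \<forall>e w. \<delta> k e w \<noteq> 0 \<longrightarrow> length w = k \<and> sum_list (map cdim w) + 2 = cdim e + k) \<and>
     (\<forall>t. fsupp t \<longrightarrow>
        odd_commutator (deriv cdim (total_delta cdim bd \<Delta> \<delta>))
                       (deriv cdim (total_delta cdim bd \<Delta> \<delta>)) t = (\<lambda>_. 0))"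
proof -
  define \<delta> where "\<delta> = (\<lambda>j. fam j j)"
  have gk: "goodk k (\<delta> k)" if "3 \<le> k" for k
    using fam_inv[of k] that unfolding GoodFam_def \<delta>_def by auto
  have D0: "deriv cdim (total_delta cdim bd \<Delta> \<delta>) (deriv cdim (total_delta cdim bd \<Delta> \<delta>) t) u = 0"
    if ft: "fsupp t" for t u
  proof -
    define N where "N = length u + 2"
    define \<epsilon> where "\<epsilon> = trunc N (TD (fam N))"
    have inv: "GoodFam (fam N) N" "Inv (fam N) N" using fam_inv[of N] by (auto simp: N_def)
    have agree: "total_delta cdim bd \<Delta> \<delta> c w = \<epsilon> c w" if "length w \<le> N" for c w
    proof -
      have "\<delta> (length w) = fam N (length w)" using fam_stab[OF that] by (simp add: \<delta>_def)
      then show ?thesis using that unfolding \<epsilon>_def trunc_def TD_def total_delta_def by simp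
    qed
    have fe: "\<And>c. fsupp (\<epsilon> c)" unfolding \<epsilon>_def by (rule eps_fsupp[OF inv(1)])
    have D1: "deriv cdim (total_delta cdim bd \<Delta> \<delta>) t v = deriv cdim \<epsilon> t v" if "length v \<le> length u + 1" for v
      by (rule deriv_cong) (use that agree N_def in auto)
    have "deriv cdim (total_delta cdim bd \<Delta> \<delta>) (deriv cdim (total_delta cdim bd \<Delta> \<delta>) t) u
        = deriv cdim \<epsilon> (deriv cdim \<epsilon> t) u"
      by (rule deriv_cong) (use D1 agree N_def in auto)
    also have "deriv cdim \<epsilon> t = DD cdim \<epsilon> t" by (rule ext) (rule deriv_eq_DD[OF ft])
    also have "deriv cdim \<epsilon> (DD cdim \<epsilon> t) u = DD cdim \<epsilon> (DD cdim \<epsilon> t) u"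
      by (rule deriv_eq_DD[OF fsupp_DD[OF ft fe]])
    also have "\<dots> = ext (Phi cdim \<epsilon>) t u"
      unfolding DD_def[of cdim \<epsilon> t]
      by (subst DD_ext[OF ft]) (auto intro: fsupp_Dw fe simp: Phi_def[abs_def])
    also have "\<dots> = 0"
    proof -
      have low: "\<And>x u'. length u' < N + 1 \<Longrightarrow> Phi cdim \<epsilon> [x] u' = 0"
        using inv(2) unfolding Inv_def \<epsilon>_def by (simp add: Phi_def)
      have "Phi cdim \<epsilon> v u = 0" for v
      proof (rule ccontr)
        assume "Phi cdim \<epsilon> v u \<noteq> 0"
        then have "length v + (N + 1) \<le> length u + 1"
          by (rule Phi_len[OF eps_nice[OF inv(1)] low[unfolded \<epsilon>_def], folded \<epsilon>_def, rotated]) 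
        then show False by (simp add: N_def)
      qed
      then show ?thesis by (simp add: ext_def)
    qed
    finally show ?thesis .
  qed
  have "odd_commutator (deriv cdim (total_delta cdim bd \<Delta> \<delta>)) (deriv cdim (total_delta cdim bd \<Delta> \<delta>)) t = (\<lambda>_. 0)"
    if "fsupp t" for t
    unfolding odd_commutator_def using D0[OF that] by simp
  moreover have "local_map cl (\<delta> k)" "\<forall>e w. cdim e = 0 \<longrightarrow> \<delta> k e w = 0"
    "\<forall>e w. \<delta> k e w \<noteq> 0 \<longrightarrow> length w = k \<and> sum_list (map cdim w) + 2 = cdim e + k" if "3 \<le> k" for k
    using gk[OF that] unfolding goodk_def by blast+
  ultimately show ?thesis by blast
qed

end

theorem mainTheorem9:
  fixes cdim :: "'c \<Rightarrow> nat" and bd :: "'c \<Rightarrow> 'c \<Rightarrow> rat" and cl :: "'c \<Rightarrow> 'c set"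
    and \<Delta> :: "'c \<Rightarrow> 'c \<Rightarrow> 'c \<Rightarrow> rat"
  assumes cx: "cell_complex cdim bd cl"
    and acyc: "\<forall>e. rat_homology_of_point cdim bd (cl e)"
    and loc2: "\<forall>e a b. \<Delta> e a b \<noteq> 0 \<longrightarrow> a \<in> cl e \<and> b \<in> cl e"
    and deg2: "\<forall>e a b. \<Delta> e a b \<noteq> 0 \<longrightarrow> cdim a + cdim b = cdim e"
    and chain_map: "\<forall>e a b. (\<Sum>f\<in>cl e. bd e f * \<Delta> f a b) =
          (\<Sum>x\<in>cl e. \<Delta> e x b * bd x a) + (\<Sum>y\<in>cl e. (-1) ^ cdim a * \<Delta> e a y * bd y b)"
    and cocomm0: "\<forall>e a b. cdim e = 0 \<longrightarrow> \<Delta> e a b = \<Delta> e b a"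
    and coassoc0: "\<forall>e a b c. cdim e = 0 \<longrightarrow>
          (\<Sum>x\<in>cl e. \<Delta> e x c * \<Delta> x a b) = (\<Sum>x\<in>cl e. \<Delta> e a x * \<Delta> x b c)"
  shows "\<exists>\<delta> :: nat \<Rightarrow> 'c \<Rightarrow> 'c list \<Rightarrow> rat.
           (\<forall>k\<ge>3. local_map cl (\<delta> k)) \<and>
           (\<forall>k\<ge>3. \<forall>e w. cdim e = 0 \<longrightarrow> \<delta> k e w = 0) \<and>
           (\<forall>k\<ge>3. \<forall>e w. \<delta> k e w \<noteq> 0 \<longrightarrow>
               length w = k \<and> sum_list (map cdim w) + 2 = cdim e + k) \<and>
           (\<forall>t. fsupp t \<longrightarrow>
               odd_commutator (deriv cdim (total_delta cdim bd \<Delta> \<delta>))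
                              (deriv cdim (total_delta cdim bd \<Delta> \<delta>)) t = (\<lambda>_. 0))"
proof -
  have "MAIN cdim bd cl \<Delta>"
    by (intro MAIN.intro CX.intro MAIN_axioms.intro cx acyc loc2 deg2 chain_map)
  then show ?thesis by (rule MAIN.main_loc)
qed


end
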